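(* Let $Z=Z_\Sigma$ be a projective toric surface over an algebraically closed field of characteristic zero, given by a complete fan $\Sigma$ in $\mathbb{Z}^2$. Then \[ [\operatorname{Cl}(Z):\operatorname{Pic}(Z)]=\frac{1}{|\operatorname{Cl}(Z)^{\mathrm{tors}}|}\prod_{\sigma\in\Sigma_{\max}}|\operatorname{Cl}(Z,z_\sigma)|, \] where $z_\sigma$ is the torus fixed point corresponding to the maximal cone $\sigma$.
   Context: $\operatorname{Cl}(Z,z)$ denotes the local class group: Weil divisors on $Z$ modulo those principal on some neighbourhood of $z$. $\operatorname{Cl}(Z)^{\mathrm{tors}}$ is the torsion subgroup of the divisor class group, and $\operatorname{Pic}(Z)\subseteq\operatorname{Cl}(Z)$ the subgroup of Cartier classes. *)

theory Defs
  imports "HOL-Algebra.Algebra"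
begin

text \<open>Lattice N = M = int x int.  A maximal cone is encoded by the ordered pair (u,v)
  of its primitive ray generators, with det(u,v) > 0.\<close>

type_synonym lat = "int \<times> int"

definition det2 :: "lat \<Rightarrow> lat \<Rightarrow> int" where
  "det2 u v = fst u * snd v - snd u * fst v"

definition pair :: "lat \<Rightarrow> lat \<Rightarrow> int" where
  "pair m u = fst m * fst u + snd m * snd u"

definition primitive :: "lat \<Rightarrow> bool" where
  "primitive u \<longleftrightarrow> gcd (fst u) (snd u) = 1"

definition cone_set :: "lat \<times> lat \<Rightarrow> (real \<times> real) set" where
  "cone_set c = {(a * of_int (fst (fst c)) + b * of_int (fst (snd c)),
                  a * of_int (snd (fst c)) + b * of_int (snd (snd c))) | a b. a \<ge> 0 \<and> b \<ge> 0}"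

definition ray_set :: "lat \<Rightarrow> (real \<times> real) set" where
  "ray_set u = {(a * of_int (fst u), a * of_int (snd u)) | a. a \<ge> 0}"

definition complete_fan2 :: "(lat \<times> lat) set \<Rightarrow> bool" where
  "complete_fan2 S \<longleftrightarrow> finite S \<and> S \<noteq> {} \<and>
     (\<forall>(u,v)\<in>S. primitive u \<and> primitive v \<and> det2 u v > 0) \<and>
     (\<forall>c\<in>S. \<forall>c'\<in>S. c \<noteq> c' \<longrightarrow>
        cone_set c \<inter> cone_set c' = {(0,0)} \<or>
        (\<exists>w. (w = fst c \<or> w = snd c) \<and> (w = fst c' \<or> w = snd c') \<and>
             cone_set c \<inter> cone_set c' = ray_set w)) \<and>
     (\<Union>c\<in>S. cone_set c) = UNIV"

definition rays :: "(lat \<times> lat) set \<Rightarrow> lat set" where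
  "rays S = fst ` S \<union> snd ` S"

definition TDiv :: "(lat \<times> lat) set \<Rightarrow> (lat \<Rightarrow> int) set" where
  "TDiv S = {D. \<forall>x. x \<notin> rays S \<longrightarrow> D x = 0}"

definition divisor_grp :: "lat set \<Rightarrow> (lat \<Rightarrow> int) monoid" where
  "divisor_grp R = \<lparr>carrier = {D. \<forall>x. x \<notin> R \<longrightarrow> D x = 0},
                     monoid.mult = (\<lambda>D E x. D x + E x), monoid.one = (\<lambda>x. 0)\<rparr>"

text \<open>Principal torus-invariant divisor div(chi^m) restricted to the ray set R.\<close>
definition prin_div :: "lat set \<Rightarrow> lat \<Rightarrow> (lat \<Rightarrow> int)" where
  "prin_div R m = (\<lambda>u. if u \<in> R then pair m u else 0)"

definition Prin :: "lat set \<Rightarrow> (lat \<Rightarrow> int) set" where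
  "Prin R = range (prin_div R)"

text \<open>A T-Weil divisor is Cartier iff it is locally principal on each affine chart U_sigma.\<close>
definition cartier :: "(lat \<times> lat) set \<Rightarrow> (lat \<Rightarrow> int) \<Rightarrow> bool" where
  "cartier S D \<longleftrightarrow> D \<in> TDiv S \<and>
     (\<forall>(u,v)\<in>S. \<exists>m. D u = pair m u \<and> D v = pair m v)"

text \<open>Projectivity: existence of an ample T-Cartier divisor (strictly convex support function).\<close>
definition projective_fan2 :: "(lat \<times> lat) set \<Rightarrow> bool" where
  "projective_fan2 S \<longleftrightarrow> (\<exists>D. cartier S D \<and>
     (\<forall>(u,v)\<in>S. \<exists>m. \<forall>w\<in>rays S.
        pair m w \<ge> - D w \<and> (pair m w = - D w \<longleftrightarrow> w = u \<or> w = v)))"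

definition Cl_grp :: "(lat \<times> lat) set \<Rightarrow> (lat \<Rightarrow> int) set monoid" where
  "Cl_grp S = divisor_grp (rays S) Mod Prin (rays S)"

definition Pic_sub :: "(lat \<times> lat) set \<Rightarrow> (lat \<Rightarrow> int) set set" where
  "Pic_sub S = {r_coset (divisor_grp (rays S)) (Prin (rays S)) D | D. cartier S D}"

definition Cl_tors :: "(lat \<times> lat) set \<Rightarrow> (lat \<Rightarrow> int) set set" where
  "Cl_tors S = {c \<in> carrier (Cl_grp S). \<exists>k::nat. k > 0 \<and> c [^]\<^bsub>Cl_grp S\<^esub> k = \<one>\<^bsub>Cl_grp S\<^esub>}"

text \<open>Local class group Cl(Z, z_sigma) = Cl(U_sigma) for the affine chart of sigma = cone(u,v).\<close>
definition local_Cl_grp :: "lat \<times> lat \<Rightarrow> (lat \<Rightarrow> int) set monoid" where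
  "local_Cl_grp c = divisor_grp {fst c, snd c} Mod Prin {fst c, snd c}"

end

theory Submission
  imports Defs "HOL-Library.Product_Plus"
begin

definition smul :: "int \<Rightarrow> lat \<Rightarrow> lat" where
  "smul k x = (k * fst x, k * snd x)"

definition rot :: "lat \<Rightarrow> lat" where
  "rot x = (- snd x, fst x)"

definition span2 :: "lat \<Rightarrow> lat \<Rightarrow> lat set" where
  "span2 u v = {smul i u + smul j v | i j. True}"

definition grp2 :: "lat set \<Rightarrow> bool" where
  "grp2 H \<longleftrightarrow> 0 \<in> H \<and> (\<forall>x\<in>H. \<forall>y\<in>H. x + y \<in> H \<and> x - y \<in> H)"

lemma smul_simps [simp]:
  "fst (smul k x) = k * fst x" "snd (smul k x) = k * snd x"
  by (simp_all add: smul_def)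

lemma rot_simps [simp]:
  "fst (rot x) = - snd x" "snd (rot x) = fst x"
  by (simp_all add: rot_def)

lemma prod_eqI2: "fst x = fst y \<Longrightarrow> snd x = snd y \<Longrightarrow> x = (y::lat)"
  by (simp add: prod_eq_iff)

lemma det_comb:
  "det2 (smul i x + smul j y) (smul k x + smul l y) = (i * l - j * k) * det2 x y"
  by (simp add: det2_def algebra_simps)

lemma det_rot [simp]: "det2 (rot a) (rot b) = det2 a b"
  by (simp add: det2_def algebra_simps)

lemma pair_rot_self [simp]: "pair (rot r) r = 0"
  by (simp add: pair_def algebra_simps)

lemma pair_add [simp]: "pair (x + y) r = pair x r + pair y r"
  by (simp add: pair_def algebra_simps)

lemma pair_diff [simp]: "pair (x - y) r = pair x r - pair y r"
  by (simp add: pair_def algebra_simps)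

lemma pair_smul [simp]: "pair (smul k x) r = k * pair x r"
  by (simp add: pair_def algebra_simps)

lemma pair_zero [simp]: "pair 0 r = 0"
  by (simp add: pair_def)

lemma pair_sum: "finite A \<Longrightarrow> pair (\<Sum>i\<in>A. f i) r = (\<Sum>i\<in>A. pair (f i) r)"
  by (induction A rule: finite_induct) auto

lemma smul_add: "smul k (x + y) = smul k x + smul k y"
  by (simp add: smul_def algebra_simps)

lemma smul_add2: "smul (k + l) x = smul k x + smul l x"
  by (simp add: smul_def algebra_simps)

lemma smul_diff2: "smul (k - l) x = smul k x - smul l x"
  by (simp add: smul_def algebra_simps)

lemma smul_smul: "smul k (smul l x) = smul (k * l) x"
  by (simp add: smul_def algebra_simps)

lemma smul_0 [simp]: "smul 0 x = 0" "smul k 0 = 0"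
  by (simp_all add: smul_def zero_prod_def)

lemma smul_1 [simp]: "smul 1 x = x"
  by (simp add: smul_def)

lemma rot_add: "rot (x + y) = rot x + rot y"
  by (simp add: rot_def)

lemma rot_smul: "rot (smul k x) = smul k (rot x)"
  by (simp add: rot_def smul_def)

lemma cramer: "smul (det2 a b) x = smul (det2 x b) a + smul (det2 a x) b"
  by (rule prod_eqI2) (simp_all add: det2_def algebra_simps)

lemma prim_perp:
  assumes "primitive v" "pair m v = 0"
  shows "\<exists>k. m = smul k (rot v)"
proof -
  obtain v1 v2 where v: "v = (v1, v2)" by (cases v)
  obtain m1 m2 where m: "m = (m1, m2)" by (cases m)
  have g: "gcd v1 v2 = 1" using assms(1) by (simp add: primitive_def v)
  have e: "m1 * v1 + m2 * v2 = 0" using assms(2) by (simp add: pair_def v m)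
  have cop: "coprime v1 v2" using g by (simp add: coprime_iff_gcd_eq_1)
  have "m2 * v2 = - (m1 * v1)" using e by linarith
  hence "v1 dvd m2 * v2" by simp
  hence "v1 dvd m2" using cop by (simp add: coprime_dvd_mult_left_iff)
  then obtain k where k: "m2 = v1 * k" by blast
  have "m1 * v1 = - (m2 * v2)" using e by linarith
  hence "v2 dvd m1 * v1" by simp
  hence "v2 dvd m1" using cop by (simp add: coprime_dvd_mult_left_iff coprime_commute)
  then obtain l where l: "m1 = v2 * l" by blast
  have "v1 * v2 * (l + k) = 0" using e k l by (simp add: algebra_simps)
  show ?thesis
  proof (cases "v1 = 0 \<or> v2 = 0")
    case True
    then show ?thesis
    proof
      assume v1: "v1 = 0"
      hence "\<bar>v2\<bar> = 1" using g by simp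
      hence "v2 = 1 \<or> v2 = -1" by arith
      hence "v2 * v2 = 1" by auto
      have "m2 * v2 = 0" using e v1 by simp
      hence "m2 = 0" using \<open>v2 * v2 = 1\<close> by auto
      show ?thesis using \<open>m2 = 0\<close> \<open>v2 * v2 = 1\<close> v1
        by (intro exI[of _ "- m1 * v2"]) (auto simp: m v rot_def smul_def algebra_simps)
    next
      assume v2: "v2 = 0"
      hence "\<bar>v1\<bar> = 1" using g by simp
      hence "v1 = 1 \<or> v1 = -1" by arith
      hence "v1 * v1 = 1" by auto
      have "m1 * v1 = 0" using e v2 by simp
      hence "m1 = 0" using \<open>v1 * v1 = 1\<close> by auto
      show ?thesis using \<open>m1 = 0\<close> \<open>v1 * v1 = 1\<close> v2
        by (intro exI[of _ "m2 * v1"]) (auto simp: m v rot_def smul_def algebra_simps)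
    qed
  next
    case False
    hence "l = - k" using \<open>v1 * v2 * (l + k) = 0\<close> by simp
    then show ?thesis by (intro exI[of _ k]) (simp add: m v k l rot_def smul_def)
  qed
qed

lemma prim_bezout: "primitive v \<Longrightarrow> \<exists>w. pair w v = 1"
proof -
  assume "primitive v"
  hence g: "gcd (fst v) (snd v) = 1" by (simp add: primitive_def)
  obtain a b where "a * fst v + b * snd v = gcd (fst v) (snd v)" using bezout_int by blast
  hence "pair (a, b) v = 1" using g by (simp add: pair_def)
  thus ?thesis by blast
qed

definition wv :: "lat \<Rightarrow> lat" where
  "wv v = (SOME w. pair w v = 1)"

lemma wv: "primitive v \<Longrightarrow> pair (wv v) v = 1"
  unfolding wv_def by (rule someI_ex) (rule prim_bezout)

lemma PW:
  assumes "primitive r"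
  shows "\<exists>k. m - smul (pair m r) (wv r) = smul k (rot r)"
  by (rule prim_perp[OF assms]) (simp add: wv[OF assms])

lemma pair_rot_left: "pair (rot v) u = - det2 u v"
  by (simp add: pair_def det2_def algebra_simps)

lemma K1:
  assumes "primitive v"
  shows "(\<exists>m. x = pair m u \<and> y = pair m v) \<longleftrightarrow> det2 u v dvd (x - y * pair (wv v) u)"
proof
  assume "\<exists>m. x = pair m u \<and> y = pair m v"
  then obtain m where m: "x = pair m u" "y = pair m v" by blast
  obtain k where k: "m - smul (pair m v) (wv v) = smul k (rot v)" using PW[OF assms] by blast
  have "m = smul k (rot v) + smul y (wv v)" using k m(2) by (simp add: diff_eq_eq)
  hence "m = smul y (wv v) + smul k (rot v)" by (simp add: add.commute)
  hence "x = y * pair (wv v) u - k * det2 u v" using m(1) by (simp add: pair_rot_left)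
  hence "x - y * pair (wv v) u = det2 u v * (- k)" by simp
  thus "det2 u v dvd (x - y * pair (wv v) u)" by (rule dvdI)
next
  assume "det2 u v dvd (x - y * pair (wv v) u)"
  then obtain k where k: "x - y * pair (wv v) u = det2 u v * k" by blast
  show "\<exists>m. x = pair m u \<and> y = pair m v"
    by (intro exI[of _ "smul y (wv v) + smul (- k) (rot v)"])
       (use k wv[OF assms] in \<open>simp add: pair_rot_left algebra_simps\<close>)
qed


lemma grp2_add: "grp2 H \<Longrightarrow> x \<in> H \<Longrightarrow> y \<in> H \<Longrightarrow> x + y \<in> H"
  and grp2_diff: "grp2 H \<Longrightarrow> x \<in> H \<Longrightarrow> y \<in> H \<Longrightarrow> x - y \<in> H"
  and grp2_zero: "grp2 H \<Longrightarrow> 0 \<in> H"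
  by (auto simp: grp2_def)

lemma grp2_smul_nat: "grp2 H \<Longrightarrow> x \<in> H \<Longrightarrow> smul (int k) x \<in> H"
proof (induction k)
  case 0 then show ?case by (simp add: grp2_def)
next
  case (Suc k)
  have "smul (int (Suc k)) x = smul (int k) x + x" by (simp add: smul_def algebra_simps prod_eq_iff)
  then show ?case using Suc by (simp add: grp2_def)
qed

lemma grp2_smul: "grp2 H \<Longrightarrow> x \<in> H \<Longrightarrow> smul k x \<in> H"
proof (cases "k \<ge> 0")
  case True
  assume "grp2 H" "x \<in> H"
  then show ?thesis using grp2_smul_nat[of H x "nat k"] True by simp
next
  case False
  assume h: "grp2 H" "x \<in> H"
  have "smul (int (nat (- k))) x \<in> H" using grp2_smul_nat[OF h] by blast
  hence "0 - smul (int (nat (- k))) x \<in> H" using h grp2_diff grp2_zero by blast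
  moreover have "0 - smul (int (nat (- k))) x = smul k x" using False by (simp add: smul_def prod_eq_iff)
  ultimately show ?thesis by simp
qed


lemma grp2_span2: "grp2 (span2 u v)"
  unfolding grp2_def span2_def
proof (intro conjI)
  show "0 \<in> {smul i u + smul j v |i j. True}" by (rule CollectI, rule exI[of _ 0], rule exI[of _ 0]) simp
next
  show "\<forall>x\<in>{smul i u + smul j v |i j. True}. \<forall>y\<in>{smul i u + smul j v |i j. True}. x + y \<in> {smul i u + smul j v |i j. True} \<and> x - y \<in> {smul i u + smul j v |i j. True}"
  proof (intro ballI)
  fix x y assume "x \<in> {smul i u + smul j v |i j. True}" "y \<in> {smul i u + smul j v |i j. True}"
  then obtain i j k l where x: "x = smul i u + smul j v" and y: "y = smul k u + smul l v" by blast
  have "x + y = smul (i + k) u + smul (j + l) v" by (simp add: x y smul_def prod_eq_iff algebra_simps)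
  moreover have "x - y = smul (i - k) u + smul (j - l) v" by (simp add: x y smul_def prod_eq_iff algebra_simps)
  ultimately show "x + y \<in> {smul i u + smul j v |i j. True} \<and> x - y \<in> {smul i u + smul j v |i j. True}"
    by blast
  qed
qed

lemma span2_sub: "grp2 H \<Longrightarrow> u \<in> H \<Longrightarrow> v \<in> H \<Longrightarrow> span2 u v \<subseteq> H"
  unfolding span2_def by (auto intro!: grp2_add grp2_smul)

lemma span2_gen1: "u \<in> span2 u v"
  unfolding span2_def by (rule CollectI) (rule exI[of _ 1], rule exI[of _ 0], simp)

lemma span2_gen2: "v \<in> span2 u v"
  unfolding span2_def by (rule CollectI) (rule exI[of _ 0], rule exI[of _ 1], simp)

lemma hnf:
  assumes H: "grp2 H" and u: "u \<in> H" and v: "v \<in> H" and d: "det2 u v \<noteq> 0"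
  shows "\<exists>a b c. a > 0 \<and> c > 0 \<and> (a, 0) \<in> H \<and> (b, c) \<in> H \<and> H = span2 (a, 0) (b, c)"
proof -
  define P where "P = (\<lambda>k::nat. k > 0 \<and> (\<exists>x\<in>H. snd x = int k))"
  have "\<exists>x\<in>H. snd x \<noteq> 0"
  proof (rule ccontr)
    assume "\<not> ?thesis"
    hence "snd u = 0" "snd v = 0" using u v by auto
    thus False using d by (simp add: det2_def)
  qed
  then obtain x where x: "x \<in> H" "snd x \<noteq> 0" by blast
  have "P (nat \<bar>snd x\<bar>)"
  proof (cases "snd x > 0")
    case True then show ?thesis using x unfolding P_def by (intro conjI bexI[of _ x]) auto
  next
    case False
    have "0 - x \<in> H" using x H grp2_diff grp2_zero by blast
    then show ?thesis using x False unfolding P_def by (intro conjI bexI[of _ "0 - x"]) auto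
  qed
  define c0 where "c0 = (LEAST k. P k)"
  have Pc: "P c0" unfolding c0_def by (rule LeastI) fact
  have cmin: "\<And>k. P k \<Longrightarrow> c0 \<le> k" unfolding c0_def by (rule Least_le)
  define c where "c = int c0"
  have cpos: "c > 0" using Pc by (simp add: P_def c_def)
  obtain y where y: "y \<in> H" "snd y = c" using Pc by (auto simp: P_def c_def)
  define b where "b = fst y"
  have "y = (b, c)" using y by (simp add: b_def prod_eq_iff)
  hence bc: "(b, c) \<in> H" using y by simp
  have snd_dvd: "c dvd snd z" if z: "z \<in> H" for z
  proof -
    have "z - smul (snd z div c) (b, c) \<in> H" using z bc H by (auto intro: grp2_diff grp2_smul)
    moreover have "snd (z - smul (snd z div c) (b, c)) = snd z mod c"
      by (simp add: minus_div_mult_eq_mod[symmetric] algebra_simps)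
    ultimately have "snd z mod c = 0 \<or> P (nat (snd z mod c))"
      unfolding P_def using cpos by (metis pos_mod_sign zero_less_nat_eq nat_0_le pos_mod_sign le_less)
    moreover have "nat (snd z mod c) < c0"
      using pos_mod_bound[OF cpos, of "snd z"] pos_mod_sign[OF cpos, of "snd z"] by (simp add: c_def nat_less_iff)
    ultimately have "snd z mod c = 0" using cmin by fastforce
    thus ?thesis by (simp add: dvd_eq_mod_eq_0)
  qed
  define Q where "Q = (\<lambda>k::nat. k > 0 \<and> (int k, 0) \<in> H)"
  define z0 where "z0 = smul (snd v) u - smul (snd u) v"
  have z0H: "z0 \<in> H" unfolding z0_def using u v H by (auto intro: grp2_diff grp2_smul)
  have z0: "z0 = (det2 u v, 0)" by (simp add: z0_def det2_def prod_eq_iff algebra_simps)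
  have "Q (nat \<bar>det2 u v\<bar>)"
  proof (cases "det2 u v > 0")
    case True then show ?thesis using z0H z0 d unfolding Q_def by auto
  next
    case False
    have "0 - z0 \<in> H" using z0H H grp2_diff grp2_zero by blast
    then show ?thesis using z0 d False unfolding Q_def by auto
  qed
  define a0 where "a0 = (LEAST k. Q k)"
  have Qa: "Q a0" unfolding a0_def by (rule LeastI) fact
  have amin: "\<And>k. Q k \<Longrightarrow> a0 \<le> k" unfolding a0_def by (rule Least_le)
  define a where "a = int a0"
  have apos: "a > 0" using Qa by (simp add: Q_def a_def)
  have aH: "(a, 0) \<in> H" using Qa by (simp add: Q_def a_def)
  have fst_dvd: "a dvd fst z" if z: "z \<in> H" "snd z = 0" for z
  proof -
    have "z - smul (fst z div a) (a, 0) \<in> H" using z aH H by (auto intro: grp2_diff grp2_smul)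
    moreover have "z - smul (fst z div a) (a, 0) = (fst z mod a, 0)"
      using z(2) by (simp add: prod_eq_iff minus_div_mult_eq_mod[symmetric] algebra_simps)
    ultimately have "fst z mod a = 0 \<or> Q (nat (fst z mod a))"
      unfolding Q_def using apos by (metis pos_mod_sign zero_less_nat_eq nat_0_le le_less)
    moreover have "nat (fst z mod a) < a0"
      using pos_mod_bound[OF apos, of "fst z"] pos_mod_sign[OF apos, of "fst z"] by (simp add: a_def nat_less_iff)
    ultimately have "fst z mod a = 0" using amin by fastforce
    thus ?thesis by (simp add: dvd_eq_mod_eq_0)
  qed
  have "H \<subseteq> span2 (a, 0) (b, c)"
  proof
    fix z assume z: "z \<in> H"
    obtain q where q: "snd z = c * q" using snd_dvd[OF z] by blast
    have z1: "z - smul q (b, c) \<in> H" using z bc H by (auto intro: grp2_diff grp2_smul)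
    have "snd (z - smul q (b, c)) = 0" using q by simp
    then obtain p where p: "fst (z - smul q (b, c)) = a * p" using fst_dvd[OF z1] by blast
    have "z = smul p (a, 0) + smul q (b, c)"
      using p q by (simp add: prod_eq_iff algebra_simps)
    thus "z \<in> span2 (a, 0) (b, c)" unfolding span2_def by blast
  qed
  moreover have "span2 (a, 0) (b, c) \<subseteq> H" using span2_sub[OF H aH bc] .
  ultimately show ?thesis using apos cpos aH bc by blast
qed


lemma span2_hnf_mem:
  assumes "a > 0" "c > 0"
  shows "z \<in> span2 (a, 0) (b, c) \<longleftrightarrow> c dvd snd z \<and> a dvd (fst z - (snd z div c) * b)"
proof
  assume "z \<in> span2 (a, 0) (b, c)"
  then obtain i j where z: "z = smul i (a, 0) + smul j (b, c)" unfolding span2_def by blast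
  have "snd z = c * j" using z by simp
  hence "snd z div c = j" using assms by simp
  thus "c dvd snd z \<and> a dvd (fst z - (snd z div c) * b)" using z by simp
next
  assume h: "c dvd snd z \<and> a dvd (fst z - (snd z div c) * b)"
  then obtain j where j: "snd z = c * j" by blast
  hence jj: "snd z div c = j" using assms by simp
  obtain i where i: "fst z - j * b = a * i" using h jj by blast
  have "z = smul i (a, 0) + smul j (b, c)" using i j by (simp add: prod_eq_iff algebra_simps)
  thus "z \<in> span2 (a, 0) (b, c)" unfolding span2_def by blast
qed

lemma hnf_index:
  fixes a b c :: int
  assumes a: "a > 0" and c: "c > 0"
  defines "f \<equiv> (\<lambda>x::lat. (snd x mod c, (fst x - (snd x div c) * b) mod a))"
  shows "\<forall>x y. f x = f y \<longleftrightarrow> x - y \<in> span2 (a, 0) (b, c)"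
    and "card (range f) = nat (a * c)"
proof -
  show "\<forall>x y. f x = f y \<longleftrightarrow> x - y \<in> span2 (a, 0) (b, c)"
  proof (intro allI)
    fix x y :: lat
    show "f x = f y \<longleftrightarrow> x - y \<in> span2 (a, 0) (b, c)"
    proof (cases "snd x mod c = snd y mod c")
      case True
      hence dv: "c dvd snd x - snd y" by (simp add: mod_eq_dvd_iff)
      have h1: "snd x = c * (snd x div c) + snd x mod c" by simp
      have h2: "snd y = c * (snd y div c) + snd y mod c" by simp
      have "snd x - snd y = c * (snd x div c) - c * (snd y div c)" using h1 h2 True by linarith
      hence "snd x - snd y = c * (snd x div c - snd y div c)" by (simp add: right_diff_distrib)
      hence qq: "(snd x - snd y) div c = snd x div c - snd y div c" using c by simp
      have "f x = f y \<longleftrightarrow> (fst x - (snd x div c) * b) mod a = (fst y - (snd y div c) * b) mod a"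
        using True by (simp add: f_def)
      also have "\<dots> \<longleftrightarrow> a dvd (fst x - (snd x div c) * b) - (fst y - (snd y div c) * b)"
        by (simp add: mod_eq_dvd_iff)
      also have "(fst x - (snd x div c) * b) - (fst y - (snd y div c) * b) = fst (x - y) - (snd (x - y) div c) * b"
        by (simp only: snd_diff fst_diff qq) (simp add: algebra_simps)
      finally show ?thesis using span2_hnf_mem[OF a c, of "x - y" b] dv by simp
    next
      case False
      hence "\<not> c dvd snd (x - y)" by (simp add: mod_eq_dvd_iff)
      then show ?thesis using False span2_hnf_mem[OF a c, of "x - y" b] by (simp add: f_def)
    qed
  qed
  have "range f = {0..<c} \<times> {0..<a}"
  proof
    show "range f \<subseteq> {0..<c} \<times> {0..<a}" using a c by (auto simp: f_def)
  next
    show "{0..<c} \<times> {0..<a} \<subseteq> range f"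
    proof
      fix p assume p: "p \<in> {0..<c} \<times> {0..<a}"
      have "f (snd p, fst p) = p" using p by (auto simp: f_def prod_eq_iff)
      thus "p \<in> range f" by (rule range_eqI[OF sym])
    qed
  qed
  thus "card (range f) = nat (a * c)" using a c by (simp add: card_cartesian_product nat_mult_distrib)
qed

lemma span2_index:
  assumes d: "det2 u v \<noteq> 0"
  shows "\<exists>f :: lat \<Rightarrow> int \<times> int. (\<forall>x y. f x = f y \<longleftrightarrow> x - y \<in> span2 u v) \<and> card (range f) = nat \<bar>det2 u v\<bar>"
proof -
  from hnf[OF grp2_span2 span2_gen1 span2_gen2 d] obtain a b c where
    abc0: "a > 0 \<and> c > 0 \<and> (a, 0) \<in> span2 u v \<and> (b, c) \<in> span2 u v \<and> span2 u v = span2 (a, 0) (b, c)"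
    by (elim exE) (rule that)
  note abc = abc0[THEN conjunct1] abc0[THEN conjunct2, THEN conjunct1]
    abc0[THEN conjunct2, THEN conjunct2, THEN conjunct1]
    abc0[THEN conjunct2, THEN conjunct2, THEN conjunct2, THEN conjunct1]
  note eq = abc0[THEN conjunct2, THEN conjunct2, THEN conjunct2, THEN conjunct2]
  have "u \<in> span2 (a, 0) (b, c)" using span2_gen1[of u v] unfolding eq .
  then obtain i1 j1 where u: "u = smul i1 (a, 0) + smul j1 (b, c)" unfolding span2_def by blast
  have "v \<in> span2 (a, 0) (b, c)" using span2_gen2[of v u] unfolding eq .
  then obtain i2 j2 where v: "v = smul i2 (a, 0) + smul j2 (b, c)" unfolding span2_def by blast
  obtain k1 l1 where a0: "(a, 0) = smul k1 u + smul l1 v" using abc(3) unfolding span2_def by blast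
  obtain k2 l2 where bc: "(b, c) = smul k2 u + smul l2 v" using abc(4) unfolding span2_def by blast
  have dd: "det2 (a, 0) (b, c) = a * c" by (simp add: det2_def)
  have "det2 u v = (i1 * j2 - j1 * i2) * det2 (a, 0) (b, c)" unfolding u v by (rule det_comb)
  hence e1: "det2 u v = (i1 * j2 - j1 * i2) * (a * c)" unfolding dd .
  have e2: "a * c = (k1 * l2 - l1 * k2) * det2 u v"
    using det_comb[of k1 u l1 v k2 l2] unfolding a0[symmetric] bc[symmetric] dd .
  have "(i1 * j2 - j1 * i2) * (k1 * l2 - l1 * k2) = 1"
  proof -
    have "(a * c) * ((i1 * j2 - j1 * i2) * (k1 * l2 - l1 * k2)) = ((i1 * j2 - j1 * i2) * (a * c)) * (k1 * l2 - l1 * k2)"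
      by (simp add: algebra_simps)
    also have "\<dots> = det2 u v * (k1 * l2 - l1 * k2)" using e1 by simp
    also have "\<dots> = a * c" using e2 by simp
    finally have "(a * c) * 1 = (a * c) * ((i1 * j2 - j1 * i2) * (k1 * l2 - l1 * k2))" by simp
    moreover have "a * c \<noteq> 0" using abc by simp
    ultimately show ?thesis by simp
  qed
  hence "\<bar>(i1 * j2 - j1 * i2) * (k1 * l2 - l1 * k2)\<bar> = 1" by simp
  hence K1: "\<bar>i1 * j2 - j1 * i2\<bar> = 1" by (rule abs_zmult_eq_1)
  have "\<bar>det2 u v\<bar> = \<bar>i1 * j2 - j1 * i2\<bar> * \<bar>a * c\<bar>" unfolding e1 by (rule abs_mult)
  also have "\<dots> = a * c" unfolding K1 using abc(1,2) by simp
  finally have "\<bar>det2 u v\<bar> = a * c" .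
  let ?f = "\<lambda>x::lat. (snd x mod c, (fst x - (snd x div c) * b) mod a)"
  have h1: "\<forall>x y. ?f x = ?f y \<longleftrightarrow> x - y \<in> span2 u v" unfolding eq by (rule hnf_index(1)[OF abc(1,2), of b])
  have h2: "card (range ?f) = nat \<bar>det2 u v\<bar>" unfolding \<open>\<bar>det2 u v\<bar> = a * c\<close> by (rule hnf_index(2)[OF abc(1,2), of b])
  show ?thesis by (rule exI[of _ ?f], rule conjI[OF h1 h2])
qed


definition emb :: "lat \<Rightarrow> real \<times> real" where
  "emb v = (of_int (fst v), of_int (snd v))"

definition detR :: "real \<times> real \<Rightarrow> real \<times> real \<Rightarrow> real" where
  "detR p q = fst p * snd q - snd p * fst q"

lemma detR_emb: "detR (emb u) (emb v) = of_int (det2 u v)"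
  by (simp add: detR_def emb_def det2_def)

lemma emb_zero_iff: "emb x = (0, 0) \<longleftrightarrow> x = 0"
  by (simp add: emb_def prod_eq_iff)

lemma cone_mem:
  assumes d: "det2 u v > 0"
  shows "p \<in> cone_set (u, v) \<longleftrightarrow> detR (emb u) p \<ge> 0 \<and> detR p (emb v) \<ge> 0"
proof
  assume "p \<in> cone_set (u, v)"
  then obtain a b :: real where ab: "a \<ge> 0" "b \<ge> 0"
    and p: "p = (a * of_int (fst u) + b * of_int (fst v), a * of_int (snd u) + b * of_int (snd v))"
    unfolding cone_set_def by auto
  have "detR (emb u) p = b * of_int (det2 u v)" by (simp add: p detR_def emb_def det2_def algebra_simps)
  moreover have "detR p (emb v) = a * of_int (det2 u v)" by (simp add: p detR_def emb_def det2_def algebra_simps)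
  ultimately show "detR (emb u) p \<ge> 0 \<and> detR p (emb v) \<ge> 0" using ab d by simp
next
  assume h: "detR (emb u) p \<ge> 0 \<and> detR p (emb v) \<ge> 0"
  define dd where "dd = (of_int (det2 u v) :: real)"
  have ddpos: "dd > 0" using d by (simp add: dd_def)
  define a where "a = detR p (emb v) / dd"
  define b where "b = detR (emb u) p / dd"
  have ab: "a \<ge> 0" "b \<ge> 0" using h ddpos by (simp_all add: a_def b_def)
  have "a * dd * of_int (fst u) + b * dd * of_int (fst v) = detR p (emb v) * of_int (fst u) + detR (emb u) p * of_int (fst v)"
    using ddpos by (simp add: a_def b_def)
  also have "\<dots> = dd * fst p" by (simp add: dd_def detR_def emb_def det2_def algebra_simps)
  finally have "a * dd * of_int (fst u) + b * dd * of_int (fst v) = dd * fst p" .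
  hence "dd * (a * of_int (fst u) + b * of_int (fst v)) = dd * fst p" by (simp add: algebra_simps)
  hence e1: "a * of_int (fst u) + b * of_int (fst v) = fst p" using ddpos by simp
  have "a * dd * of_int (snd u) + b * dd * of_int (snd v) = detR p (emb v) * of_int (snd u) + detR (emb u) p * of_int (snd v)"
    using ddpos by (simp add: a_def b_def)
  also have "\<dots> = dd * snd p" by (simp add: dd_def detR_def emb_def det2_def algebra_simps)
  finally have "a * dd * of_int (snd u) + b * dd * of_int (snd v) = dd * snd p" .
  hence "dd * (a * of_int (snd u) + b * of_int (snd v)) = dd * snd p" by (simp add: algebra_simps)
  hence e2: "a * of_int (snd u) + b * of_int (snd v) = snd p" using ddpos by simp
  have "p = (a * of_int (fst u) + b * of_int (fst v), a * of_int (snd u) + b * of_int (snd v))"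
    using e1 e2 by (simp add: prod_eq_iff)
  thus "p \<in> cone_set (u, v)" unfolding cone_set_def using ab by auto
qed

lemma cone_mem_int:
  assumes "det2 u v > 0"
  shows "emb x \<in> cone_set (u, v) \<longleftrightarrow> det2 u x \<ge> 0 \<and> det2 x v \<ge> 0"
  using cone_mem[OF assms, of "emb x"] by (simp add: detR_emb)

lemma ray_det: "p \<in> ray_set w \<Longrightarrow> detR (emb w) p = 0"
  unfolding ray_set_def by (auto simp: detR_def emb_def algebra_simps)

lemma det2_self [simp]: "det2 x x = 0"
  by (simp add: det2_def)

lemma det2_swap: "det2 x y = - det2 y x"
  by (simp add: det2_def)

lemma det2_lin_right: "det2 a (smul k x + y) = k * det2 a x + det2 a y"
  and det2_lin_right2: "det2 a (smul k x - y) = k * det2 a x - det2 a y"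
  and det2_lin_left: "det2 (smul k x + y) b = k * det2 x b + det2 y b"
  and det2_lin_left2: "det2 (smul k x - y) b = k * det2 x b - det2 y b"
  by (simp_all add: det2_def algebra_simps)

lemma det2_add_right: "det2 a (x + y) = det2 a x + det2 a y"
  and det2_add_left: "det2 (x + y) b = det2 x b + det2 y b"
  by (simp_all add: det2_def algebra_simps)

lemma det2_nonzero_imp: "det2 u v \<noteq> 0 \<Longrightarrow> v \<noteq> 0"
  by (auto simp: det2_def)

locale fan2 =
  fixes S :: "(lat \<times> lat) set"
  assumes cf: "complete_fan2 S"
begin

lemma finS: "finite S" using cf by (simp add: complete_fan2_def)
lemma neS: "S \<noteq> {}" using cf by (simp add: complete_fan2_def)

lemma cone_props: "(u, v) \<in> S \<Longrightarrow> primitive u \<and> primitive v \<and> det2 u v > 0"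
proof -
  assume "(u, v) \<in> S"
  moreover have "\<forall>(u,v)\<in>S. primitive u \<and> primitive v \<and> det2 u v > 0" using cf by (simp add: complete_fan2_def)
  ultimately show ?thesis by fast
qed

lemma cover: "\<exists>c\<in>S. p \<in> cone_set c"
proof -
  have "p \<in> (\<Union>c\<in>S. cone_set c)" using cf by (simp add: complete_fan2_def)
  thus ?thesis by blast
qed

lemma inter_ray:
  assumes c: "c \<in> S" and c': "c' \<in> S" and ne: "c \<noteq> c'"
    and p: "p \<in> cone_set c" "p \<in> cone_set c'" and p0: "p \<noteq> (0, 0)"
  shows "\<exists>w. (w = fst c \<or> w = snd c) \<and> (w = fst c' \<or> w = snd c') \<and> detR (emb w) p = 0"
proof -
  have "cone_set c \<inter> cone_set c' = {(0,0)} \<or>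
        (\<exists>w. (w = fst c \<or> w = snd c) \<and> (w = fst c' \<or> w = snd c') \<and>
             cone_set c \<inter> cone_set c' = ray_set w)"
  proof -
    have "\<forall>c\<in>S. \<forall>c'\<in>S. c \<noteq> c' \<longrightarrow>
        cone_set c \<inter> cone_set c' = {(0,0)} \<or>
        (\<exists>w. (w = fst c \<or> w = snd c) \<and> (w = fst c' \<or> w = snd c') \<and>
             cone_set c \<inter> cone_set c' = ray_set w)" using cf by (simp add: complete_fan2_def)
    thus ?thesis using c c' ne by fast
  qed
  moreover have "p \<in> cone_set c \<inter> cone_set c'" using p by blast
  ultimately obtain w where "(w = fst c \<or> w = snd c) \<and> (w = fst c' \<or> w = snd c')" "p \<in> ray_set w"
    using p0 by auto
  thus ?thesis using ray_det by blast
qed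

lemma inter_ray_int:
  assumes c: "(u, v) \<in> S" and c': "(a, b) \<in> S" and ne: "(u, v) \<noteq> (a, b)"
    and x: "emb x \<in> cone_set (u, v)" "emb x \<in> cone_set (a, b)" and x0: "x \<noteq> 0"
  shows "\<exists>w. (w = u \<or> w = v) \<and> (w = a \<or> w = b) \<and> det2 w x = 0"
proof -
  have "emb x \<noteq> (0, 0)" using x0 emb_zero_iff by blast
  from inter_ray[OF c c' ne x this] obtain w where
    w: "(w = u \<or> w = v) \<and> (w = a \<or> w = b)" "detR (emb w) (emb x) = 0" by auto
  have "det2 w x = 0" using w(2) by (simp add: detR_emb)
  thus ?thesis using w(1) by blast
qed

end


lemma K_bound:
  fixes K d e :: int
  assumes "K > \<bar>e\<bar>" "K * d - e \<ge> 0"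
  shows "d \<ge> 0"
proof (rule ccontr)
  assume "\<not> d \<ge> 0"
  hence "d \<le> -1" by simp
  hence "K * d \<le> K * (-1)" using assms(1) by (intro mult_left_mono) auto
  thus False using assms by linarith
qed

context fan2
begin

lemma sum_bound:
  fixes f :: "lat \<times> lat \<Rightarrow> int"
  assumes "c \<in> S" "\<And>c. f c \<ge> 0"
  shows "f c \<le> (\<Sum>c\<in>S. f c)"
  using member_le_sum[of c S f] assms finS by auto

lemma succ_ex:
  assumes uv: "(u, v) \<in> S"
  shows "\<exists>b. (v, b) \<in> S"
proof -
  define K where "K = 1 + (\<Sum>c\<in>S. \<bar>det2 (fst c) u\<bar> + \<bar>det2 u (snd c)\<bar>)"
  define p where "p = smul K v - u"
  have duv: "det2 u v > 0" using cone_props[OF uv] by blast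
  obtain c' where c': "c' \<in> S" "emb p \<in> cone_set c'" using cover by blast
  obtain a b where ab: "c' = (a, b)" by (cases c')
  have abS: "(a, b) \<in> S" using c' ab by simp
  have dab: "det2 a b > 0" using cone_props[OF abS] by blast
  have bnd: "\<bar>det2 a u\<bar> + \<bar>det2 u b\<bar> \<le> K - 1"
    using sum_bound[OF c'(1), of "\<lambda>c. \<bar>det2 (fst c) u\<bar> + \<bar>det2 u (snd c)\<bar>"] ab
    unfolding K_def by simp
  have m: "det2 a p \<ge> 0" "det2 p b \<ge> 0" using c'(2) ab cone_mem_int[OF dab] by auto
  have "det2 a p = K * det2 a v - det2 a u" unfolding p_def by (rule det2_lin_right2)
  hence av: "det2 a v \<ge> 0" using K_bound[of "det2 a u" K "det2 a v"] m bnd by simp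
  have "det2 p b = K * det2 v b - det2 u b" unfolding p_def by (rule det2_lin_left2)
  hence vb: "det2 v b \<ge> 0" using K_bound[of "det2 u b" K "det2 v b"] m bnd by simp
  have vin: "emb v \<in> cone_set (a, b)" using cone_mem_int[OF dab] av vb by simp
  have vin2: "emb v \<in> cone_set (u, v)" using cone_mem_int[OF duv] duv by simp
  have pv: "det2 p v = - det2 u v" unfolding p_def by (simp add: det2_lin_left2)
  have "emb p \<notin> cone_set (u, v)" using cone_mem_int[OF duv, of p] pv duv by simp
  hence ne: "(u, v) \<noteq> (a, b)" using c'(2) ab by auto
  have v0: "v \<noteq> 0" using duv by (auto simp: det2_def)
  obtain w where w: "w = u \<or> w = v" "w = a \<or> w = b" "det2 w v = 0"
    using inter_ray_int[OF uv abS ne vin2 vin v0] by blast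
  have "w = v" using w(1,3) duv by auto
  hence "v = a \<or> v = b" using w(2) by simp
  moreover have "v \<noteq> b" using m(2) pv duv by auto
  ultimately have "v = a" by simp
  thus ?thesis using abS by blast
qed

lemma succ_uniq:
  assumes vb: "(v, b) \<in> S" and vb': "(v, b') \<in> S"
  shows "b = b'"
proof (rule ccontr)
  assume nb: "b \<noteq> b'"
  define K where "K = 1 + \<bar>det2 b b'\<bar>"
  define x where "x = smul K v + b"
  have d1: "det2 v b > 0" using cone_props[OF vb] by blast
  have d2: "det2 v b' > 0" using cone_props[OF vb'] by blast
  have Kp: "K > 0" unfolding K_def by simp
  have "det2 v x = det2 v b" unfolding x_def by (simp add: det2_lin_right)
  hence vx: "det2 v x > 0" using d1 by simp
  have xb: "det2 x b = K * det2 v b" unfolding x_def by (simp add: det2_lin_left)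
  hence xb0: "det2 x b \<ge> 0" using Kp d1 by simp
  have xb': "det2 x b' = K * det2 v b' + det2 b b'" unfolding x_def by (simp add: det2_lin_left)
  have "K * det2 v b' \<ge> K * 1" using d2 Kp by (intro mult_left_mono) auto
  hence t1: "K * det2 v b' \<ge> K" by simp
  have t2: "det2 b b' \<ge> - \<bar>det2 b b'\<bar>" by simp
  have xb'0: "det2 x b' > 0" using xb' t1 t2 K_def by linarith
  have in1: "emb x \<in> cone_set (v, b)" using cone_mem_int[OF d1] vx xb0 by simp
  have in2: "emb x \<in> cone_set (v, b')" using cone_mem_int[OF d2] vx xb'0 by simp
  have x0: "x \<noteq> 0" using vx by (auto simp: det2_def)
  have ne: "(v, b) \<noteq> (v, b')" using nb by simp
  obtain w where w: "w = v \<or> w = b" "w = v \<or> w = b'" "det2 w x = 0"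
    using inter_ray_int[OF vb vb' ne in1 in2 x0] by blast
  have "det2 b x = - det2 x b" by (rule det2_swap)
  show False using w vx nb xb'0 det2_swap[of x b'] by auto
qed

lemma pred_ex:
  assumes uv: "(u, v) \<in> S"
  shows "\<exists>a. (a, u) \<in> S"
proof -
  define K where "K = 1 + (\<Sum>c\<in>S. \<bar>det2 (fst c) v\<bar> + \<bar>det2 v (snd c)\<bar>)"
  define p where "p = smul K u - v"
  have duv: "det2 u v > 0" using cone_props[OF uv] by blast
  obtain c' where c': "c' \<in> S" "emb p \<in> cone_set c'" using cover by blast
  obtain a b where ab: "c' = (a, b)" by (cases c')
  have abS: "(a, b) \<in> S" using c' ab by simp
  have dab: "det2 a b > 0" using cone_props[OF abS] by blast
  have bnd: "\<bar>det2 a v\<bar> + \<bar>det2 v b\<bar> \<le> K - 1"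
    using sum_bound[OF c'(1), of "\<lambda>c. \<bar>det2 (fst c) v\<bar> + \<bar>det2 v (snd c)\<bar>"] ab
    unfolding K_def by simp
  have m: "det2 a p \<ge> 0" "det2 p b \<ge> 0" using c'(2) ab cone_mem_int[OF dab] by auto
  have "det2 a p = K * det2 a u - det2 a v" unfolding p_def by (rule det2_lin_right2)
  hence au: "det2 a u \<ge> 0" using K_bound[of "det2 a v" K "det2 a u"] m bnd by simp
  have "det2 p b = K * det2 u b - det2 v b" unfolding p_def by (rule det2_lin_left2)
  hence ub: "det2 u b \<ge> 0" using K_bound[of "det2 v b" K "det2 u b"] m bnd by simp
  have uin: "emb u \<in> cone_set (a, b)" using cone_mem_int[OF dab] au ub by simp
  have uin2: "emb u \<in> cone_set (u, v)" using cone_mem_int[OF duv] duv by simp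
  have up: "det2 u p = - det2 u v" unfolding p_def by (simp add: det2_lin_right2)
  have "emb p \<notin> cone_set (u, v)" using cone_mem_int[OF duv, of p] up duv by simp
  hence ne: "(u, v) \<noteq> (a, b)" using c'(2) ab by auto
  have u0: "u \<noteq> 0" using duv by (auto simp: det2_def)
  obtain w where w: "w = u \<or> w = v" "w = a \<or> w = b" "det2 w u = 0"
    using inter_ray_int[OF uv abS ne uin2 uin u0] by blast
  have "w = u" using w(1,3) duv det2_swap[of v u] by auto
  hence "u = a \<or> u = b" using w(2) by simp
  moreover have "u \<noteq> a" using m(1) up duv by auto
  ultimately have "u = b" by simp
  thus ?thesis using abS by blast
qed

lemma pred_uniq:
  assumes av: "(a, v) \<in> S" and av': "(a', v) \<in> S"
  shows "a = a'"
proof (rule ccontr)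
  assume na: "a \<noteq> a'"
  define K where "K = 1 + \<bar>det2 a' a\<bar>"
  define x where "x = smul K v + a"
  have d1: "det2 a v > 0" using cone_props[OF av] by blast
  have d2: "det2 a' v > 0" using cone_props[OF av'] by blast
  have Kp: "K > 0" unfolding K_def by simp
  have "det2 x v = det2 a v" unfolding x_def by (simp add: det2_lin_left)
  hence xv: "det2 x v > 0" using d1 by simp
  have ax: "det2 a x = K * det2 a v" unfolding x_def by (simp add: det2_lin_right)
  hence ax0: "det2 a x \<ge> 0" using Kp d1 by simp
  have ax': "det2 a' x = K * det2 a' v + det2 a' a" unfolding x_def by (simp add: det2_lin_right)
  have "K * det2 a' v \<ge> K * 1" using d2 Kp by (intro mult_left_mono) auto
  hence t1: "K * det2 a' v \<ge> K" by simp
  have t2: "det2 a' a \<ge> - \<bar>det2 a' a\<bar>" by simp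
  have ax'0: "det2 a' x > 0" using ax' t1 t2 K_def by linarith
  have in1: "emb x \<in> cone_set (a, v)" using cone_mem_int[OF d1] xv ax0 by simp
  have in2: "emb x \<in> cone_set (a', v)" using cone_mem_int[OF d2] xv ax'0 by simp
  have x0: "x \<noteq> 0" using xv by (auto simp: det2_def)
  have ne: "(a, v) \<noteq> (a', v)" using na by simp
  obtain w where w: "w = a \<or> w = v" "w = a' \<or> w = v" "det2 w x = 0"
    using inter_ray_int[OF av av' ne in1 in2 x0] by blast
  show False using w xv na ax'0 det2_swap[of x v] by auto
qed

end


lemma det_trans:
  fixes s :: int
  assumes "s * det2 y x > 0" "s * det2 z x > 0" "s * det2 w x > 0"
    and "det2 y z > 0" "det2 z w > 0"
  shows "det2 y w > 0"
proof -
  have idt: "det2 y z * (s * det2 w x) + det2 z w * (s * det2 y x) + det2 w y * (s * det2 z x) = 0"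
    by (simp add: det2_def algebra_simps)
  have "det2 y z * (s * det2 w x) > 0" using assms by simp
  moreover have "det2 z w * (s * det2 y x) > 0" using assms by simp
  ultimately have "det2 w y * (s * det2 z x) < 0" using idt by linarith
  have T: "s * det2 z x > 0" by (rule assms(2))
  have "det2 w y < 0"
  proof (rule ccontr)
    assume "\<not> det2 w y < 0"
    hence "det2 w y * (s * det2 z x) \<ge> 0" using T by simp
    thus False using \<open>det2 w y * (s * det2 z x) < 0\<close> by simp
  qed
  thus ?thesis using det2_swap[of y w] by simp
qed

context fan2
begin

definition succ :: "lat \<Rightarrow> lat" where
  "succ v = (THE b. (v, b) \<in> S)"

lemma succ_in: "v \<in> fst ` S \<Longrightarrow> (v, succ v) \<in> S"
proof -
  assume "v \<in> fst ` S"
  then obtain b where b: "(v, b) \<in> S" by force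
  have "(THE b. (v, b) \<in> S) = b"
  proof (rule the_equality)
    show "(v, b) \<in> S" by (rule b)
    show "\<And>y. (v, y) \<in> S \<Longrightarrow> y = b" using b succ_uniq by blast
  qed
  thus ?thesis using b by (simp add: succ_def)
qed

lemma succ_eq: "(v, b) \<in> S \<Longrightarrow> succ v = b"
proof -
  assume vb: "(v, b) \<in> S"
  hence "v \<in> fst ` S" by force
  hence "(v, succ v) \<in> S" by (rule succ_in)
  thus ?thesis using vb succ_uniq by blast
qed

lemma snd_sub_fst: "snd ` S \<subseteq> fst ` S"
proof
  fix v assume "v \<in> snd ` S"
  then obtain u where "(u, v) \<in> S" by force
  then obtain b where "(v, b) \<in> S" using succ_ex by blast
  thus "v \<in> fst ` S" by force
qed

lemma succ_fst: "v \<in> fst ` S \<Longrightarrow> succ v \<in> fst ` S"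
  using succ_in snd_sub_fst by force

lemma succ_inj: "v \<in> fst ` S \<Longrightarrow> v' \<in> fst ` S \<Longrightarrow> succ v = succ v' \<Longrightarrow> v = v'"
proof -
  assume a: "v \<in> fst ` S" "v' \<in> fst ` S" "succ v = succ v'"
  have "(v', succ v') \<in> S" using succ_in a(2) by blast
  hence "(v', succ v) \<in> S" using a(3) by simp
  moreover have "(v, succ v) \<in> S" using succ_in a(1) by blast
  ultimately have "(v, succ v) \<in> S" "(v', succ v) \<in> S" by blast+
  thus ?thesis by (rule pred_uniq)
qed

definition r0 :: lat where "r0 = (SOME v. v \<in> fst ` S)"

definition rho :: "nat \<Rightarrow> lat" where "rho k = (succ ^^ k) r0"

lemma r0_in: "r0 \<in> fst ` S"
proof -
  have "\<exists>v. v \<in> fst ` S" using neS by blast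
  thus ?thesis unfolding r0_def by (rule someI_ex)
qed

lemma rho_Suc: "rho (Suc k) = succ (rho k)"
  by (simp add: rho_def)

lemma rho_in: "rho k \<in> fst ` S"
proof (induction k)
  case 0 then show ?case by (simp add: rho_def r0_in)
next
  case (Suc k) then show ?case unfolding rho_Suc by (rule succ_fst)
qed

lemma rho_S: "(rho k, rho (Suc k)) \<in> S"
  using succ_in[OF rho_in[of k]] by (simp add: rho_Suc)

lemma rho_shift: "rho (Suc i) = rho (Suc j) \<Longrightarrow> rho i = rho j"
proof -
  assume "rho (Suc i) = rho (Suc j)"
  hence "succ (rho i) = succ (rho j)" by (simp add: rho_Suc)
  thus ?thesis by (rule succ_inj[OF rho_in rho_in])
qed

lemma rho_back: "i \<le> j \<Longrightarrow> rho i = rho j \<Longrightarrow> rho 0 = rho (j - i)"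
proof (induction i arbitrary: j)
  case 0 then show ?case by simp
next
  case (Suc i)
  then obtain j' where j: "j = Suc j'" by (cases j) auto
  have "rho (Suc i) = rho (Suc j')" using Suc.prems(2) j by simp
  hence "rho i = rho j'" by (rule rho_shift)
  thus ?case using Suc j by simp
qed

lemma ex_period: "\<exists>n. n > 0 \<and> rho n = rho 0"
proof -
  have "range rho \<subseteq> fst ` S" using rho_in by blast
  hence "finite (range rho)" using finS finite_subset by blast
  hence "\<not> inj rho" using range_inj_infinite by blast
  then obtain i j where ij: "i \<noteq> j" "rho i = rho j" unfolding inj_def by blast
  show ?thesis
  proof (cases "i < j")
    case True
    then show ?thesis using rho_back[of i j] ij by (intro exI[of _ "j - i"]) auto
  next
    case False
    hence "j < i" using ij by simp
    then show ?thesis using rho_back[of j i] ij by (intro exI[of _ "i - j"]) auto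
  qed
qed

definition nn :: nat where "nn = (LEAST n. n > 0 \<and> rho n = rho 0)"

lemma nn: "nn > 0" "rho nn = rho 0"
  using LeastI_ex[OF ex_period] unfolding nn_def by auto

lemma nn_min: "0 < m \<Longrightarrow> rho m = rho 0 \<Longrightarrow> nn \<le> m"
  unfolding nn_def by (rule Least_le) simp

lemma rho_per: "rho (k + nn) = rho k"
proof -
  have "rho (k + nn) = (succ ^^ k) ((succ ^^ nn) r0)" by (simp add: rho_def funpow_add)
  also have "(succ ^^ nn) r0 = r0" using nn(2) by (simp add: rho_def)
  finally show ?thesis by (simp add: rho_def)
qed

lemma rho_per_mult: "rho (k + m * nn) = rho k"
proof (induction m)
  case 0 then show ?case by simp
next
  case (Suc m)
  have e: "k + Suc m * nn = (k + m * nn) + nn" by simp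
  show ?case unfolding e rho_per by (rule Suc.IH)
qed

lemma rho_mod: "rho (k mod nn) = rho k"
  using rho_per_mult[of "k mod nn" "k div nn"] by (simp add: mod_div_mult_eq)

lemma rho_inj: "inj_on rho {..<nn}"
proof (rule inj_onI)
  fix i j assume i: "i \<in> {..<nn}" and j: "j \<in> {..<nn}" and e: "rho i = rho j"
  show "i = j"
  proof (rule ccontr)
    assume "i \<noteq> j"
    hence "i < j \<or> j < i" by arith
    thus False
    proof
      assume "i < j"
      hence "rho 0 = rho (j - i)" using rho_back[of i j] e by simp
      hence "nn \<le> j - i" using nn_min[of "j - i"] \<open>i < j\<close> by simp
      thus False using j by simp
    next
      assume "j < i"
      hence "rho 0 = rho (i - j)" using rho_back[of j i] e by simp
      hence "nn \<le> i - j" using nn_min[of "i - j"] \<open>j < i\<close> by simp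
      thus False using i by simp
    qed
  qed
qed

lemma rho_prim: "primitive (rho i)"
  using cone_props[OF rho_S[of i]] by blast

lemma rho_det: "det2 (rho i) (rho (Suc i)) > 0"
  using cone_props[OF rho_S[of i]] by blast

lemma cover_cyc: "\<exists>i<nn. det2 (rho i) x \<ge> 0 \<and> det2 x (rho (Suc i)) \<ge> 0"
proof (rule ccontr)
  assume "\<not> ?thesis"
  hence H0: "\<And>i. i < nn \<Longrightarrow> det2 (rho i) x \<ge> 0 \<Longrightarrow> det2 (rho (Suc i)) x > 0"
  proof -
    fix i assume "\<not> (\<exists>i<nn. det2 (rho i) x \<ge> 0 \<and> det2 x (rho (Suc i)) \<ge> 0)" "i < nn" "det2 (rho i) x \<ge> 0"
    hence "det2 x (rho (Suc i)) < 0" by auto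
    thus "det2 (rho (Suc i)) x > 0" using det2_swap[of x "rho (Suc i)"] by simp
  qed
  have H: "det2 (rho (Suc i)) x > 0" if "det2 (rho i) x \<ge> 0" for i
  proof -
    have "rho (Suc i) = succ (rho i)" by (rule rho_Suc)
    also have "\<dots> = succ (rho (i mod nn))" by (simp add: rho_mod)
    also have "\<dots> = rho (Suc (i mod nn))" by (simp add: rho_Suc)
    finally have e: "rho (Suc i) = rho (Suc (i mod nn))" .
    have "i mod nn < nn" using nn(1) by simp
    moreover have "det2 (rho (i mod nn)) x \<ge> 0" using that by (simp add: rho_mod)
    ultimately show ?thesis using H0 e by simp
  qed
  have "\<exists>s::int. \<forall>i. s * det2 (rho i) x > 0"
  proof (cases "\<exists>j. det2 (rho j) x \<ge> 0")
    case True
    then obtain j where j: "det2 (rho j) x \<ge> 0" by blast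
    have all: "det2 (rho (j + Suc k)) x > 0" for k
    proof (induction k)
      case 0 then show ?case using H j by simp
    next
      case (Suc k) then show ?case using H[of "j + Suc k"] by simp
    qed
    have "det2 (rho i) x > 0" for i
    proof -
      have "Suc j * 1 \<le> Suc j * nn" using nn(1) by (intro mult_le_mono2) simp
      hence nj: "Suc j \<le> Suc j * nn" by simp
      have "rho i = rho (i + Suc j * nn)" by (rule rho_per_mult[symmetric])
      also have "i + Suc j * nn = j + Suc (i + Suc j * nn - Suc j)" using nj by simp
      finally show ?thesis using all by simp
    qed
    then show ?thesis by (intro exI[of _ 1]) simp
  next
    case False
    hence "det2 (rho i) x < 0" for i using not_le by blast
    then show ?thesis by (intro exI[of _ "-1"]) simp
  qed
  then obtain s :: int where s: "\<And>i. s * det2 (rho i) x > 0" by blast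
  have "det2 (rho 0) (rho (Suc k)) > 0" for k
  proof (induction k)
    case 0 then show ?case using rho_det by simp
  next
    case (Suc k)
    show ?case by (rule det_trans[OF s s s Suc rho_det])
  qed
  from this[of "nn - 1"] show False using nn by simp
qed

lemma orbit: "fst ` S \<subseteq> rho ` {..<nn}"
proof
  fix r assume "r \<in> fst ` S"
  then obtain t where rt: "(r, t) \<in> S" by force
  show "r \<in> rho ` {..<nn}"
  proof (rule ccontr)
    assume nr: "r \<notin> rho ` {..<nn}"
    define x where "x = r + t"
    have drt: "det2 r t > 0" using cone_props[OF rt] by blast
    have rx: "det2 r x = det2 r t" unfolding x_def by (simp add: det2_add_right)
    have xt: "det2 x t = det2 r t" unfolding x_def by (simp add: det2_add_left)
    obtain i where i: "i < nn" "det2 (rho i) x \<ge> 0" "det2 x (rho (Suc i)) \<ge> 0"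
      using cover_cyc by blast
    have in1: "emb x \<in> cone_set (rho i, rho (Suc i))" using cone_mem_int[OF rho_det] i by simp
    have in2: "emb x \<in> cone_set (r, t)" using cone_mem_int[OF drt] rx xt drt by simp
    have ne: "(r, t) \<noteq> (rho i, rho (Suc i))" using nr i(1) by auto
    have x0: "x \<noteq> 0" using rx drt by (auto simp: det2_def)
    obtain w where w: "w = r \<or> w = t" "det2 w x = 0"
      using inter_ray_int[OF rt rho_S ne in2 in1 x0] by blast
    show False using w rx xt drt det2_swap[of t x] by auto
  qed
qed

lemma rays_eq: "rays S = rho ` {..<nn}"
proof -
  have "rays S = fst ` S" unfolding rays_def using snd_sub_fst by blast
  moreover have "rho ` {..<nn} \<subseteq> fst ` S" using rho_in by blast
  ultimately show ?thesis using orbit by blast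
qed

lemma S_eq: "S = (\<lambda>i. (rho i, rho (Suc i))) ` {..<nn}"
proof
  show "(\<lambda>i. (rho i, rho (Suc i))) ` {..<nn} \<subseteq> S" using rho_S by blast
next
  show "S \<subseteq> (\<lambda>i. (rho i, rho (Suc i))) ` {..<nn}"
  proof
    fix c assume c: "c \<in> S"
    obtain u v where uv: "c = (u, v)" by (cases c)
    have "u \<in> fst ` S" using c uv by force
    then obtain i where i: "i < nn" "u = rho i" using orbit by blast
    have "v = succ u" using succ_eq c uv by simp
    hence "v = rho (Suc i)" using i by (simp add: rho_Suc)
    thus "c \<in> (\<lambda>i. (rho i, rho (Suc i))) ` {..<nn}" using uv i by blast
  qed
qed

end


definition addcl :: "(lat \<Rightarrow> int) set \<Rightarrow> bool" where
  "addcl P \<longleftrightarrow> (\<lambda>x. 0) \<in> P \<and> (\<forall>f\<in>P. \<forall>g\<in>P. (\<lambda>x. f x + g x) \<in> P \<and> (\<lambda>x. f x - g x) \<in> P)"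

lemma addcl_add: "addcl P \<Longrightarrow> f \<in> P \<Longrightarrow> g \<in> P \<Longrightarrow> (\<lambda>x. f x + g x) \<in> P"
  and addcl_diff: "addcl P \<Longrightarrow> f \<in> P \<Longrightarrow> g \<in> P \<Longrightarrow> (\<lambda>x. f x - g x) \<in> P"
  and addcl_zero: "addcl P \<Longrightarrow> (\<lambda>x. 0) \<in> P"
  by (auto simp: addcl_def)

definition cosP :: "(lat \<Rightarrow> int) set \<Rightarrow> (lat \<Rightarrow> int) \<Rightarrow> (lat \<Rightarrow> int) set" where
  "cosP P a = (\<lambda>h x. h x + a x) ` P"

lemma cosP_memI: "h \<in> P \<Longrightarrow> y = (\<lambda>x. h x + a x) \<Longrightarrow> y \<in> cosP P a"
  unfolding cosP_def by (rule image_eqI[where x = h]) simp_all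

lemma cosP_memE: "y \<in> cosP P a \<Longrightarrow> \<exists>h\<in>P. y = (\<lambda>x. h x + a x)"
  unfolding cosP_def by (rule imageE) auto

lemma r_coset_div: "r_coset (divisor_grp R) P a = cosP P a"
  unfolding r_coset_def divisor_grp_def cosP_def by auto

lemma carrier_div: "carrier (divisor_grp R) = {D. \<forall>x. x \<notin> R \<longrightarrow> D x = 0}"
  by (simp add: divisor_grp_def)

lemma cosP_eq:
  assumes P: "addcl P"
  shows "cosP P a = cosP P b \<longleftrightarrow> (\<lambda>x. a x - b x) \<in> P"
proof
  assume e: "cosP P a = cosP P b"
  have "a \<in> cosP P a" by (rule cosP_memI[OF addcl_zero[OF P]]) simp
  hence "a \<in> cosP P b" using e by simp
  then obtain h where h: "h \<in> P" "a = (\<lambda>x. h x + b x)" using cosP_memE by blast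
  have "(\<lambda>x. a x - b x) = h" using h(2) by auto
  thus "(\<lambda>x. a x - b x) \<in> P" using h(1) by simp
next
  assume d: "(\<lambda>x. a x - b x) \<in> P"
  show "cosP P a = cosP P b"
  proof
    show "cosP P a \<subseteq> cosP P b"
    proof
      fix y assume "y \<in> cosP P a"
      then obtain h where h: "h \<in> P" "y = (\<lambda>x. h x + a x)" using cosP_memE by blast
      have "(\<lambda>x. h x + (a x - b x)) \<in> P" using addcl_add[OF P h(1) d] by simp
      moreover have "y = (\<lambda>x. (h x + (a x - b x)) + b x)" using h(2) by auto
      ultimately show "y \<in> cosP P b" by (rule cosP_memI)
    qed
  next
    show "cosP P b \<subseteq> cosP P a"
    proof
      fix y assume "y \<in> cosP P b"
      then obtain h where h: "h \<in> P" "y = (\<lambda>x. h x + b x)" using cosP_memE by blast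
      have "(\<lambda>x. h x - (a x - b x)) \<in> P" using addcl_diff[OF P h(1) d] by simp
      moreover have "y = (\<lambda>x. (h x - (a x - b x)) + a x)" using h(2) by auto
      ultimately show "y \<in> cosP P a" by (rule cosP_memI)
    qed
  qed
qed

lemma set_mult_div: "set_mult (divisor_grp R) A B = (\<Union>p\<in>A. \<Union>q\<in>B. {(\<lambda>x. p x + q x)})"
  by (simp add: set_mult_def divisor_grp_def)

lemma set_mult_cosP:
  assumes P: "addcl P"
  shows "set_mult (divisor_grp R) (cosP P a) (cosP P b) = cosP P (\<lambda>x. a x + b x)"
proof
  show "set_mult (divisor_grp R) (cosP P a) (cosP P b) \<subseteq> cosP P (\<lambda>x. a x + b x)"
  proof
    fix y assume "y \<in> set_mult (divisor_grp R) (cosP P a) (cosP P b)"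
    then obtain p q where pq: "p \<in> cosP P a" "q \<in> cosP P b" "y = (\<lambda>x. p x + q x)"
      unfolding set_mult_div by blast
    obtain h where h: "h \<in> P" "p = (\<lambda>x. h x + a x)" using cosP_memE[OF pq(1)] by blast
    obtain k where k: "k \<in> P" "q = (\<lambda>x. k x + b x)" using cosP_memE[OF pq(2)] by blast
    have "(\<lambda>x. h x + k x) \<in> P" using addcl_add[OF P h(1) k(1)] .
    moreover have "y = (\<lambda>x. (h x + k x) + (a x + b x))" using pq(3) h(2) k(2) by (auto simp: algebra_simps)
    ultimately show "y \<in> cosP P (\<lambda>x. a x + b x)" by (rule cosP_memI)
  qed
next
  show "cosP P (\<lambda>x. a x + b x) \<subseteq> set_mult (divisor_grp R) (cosP P a) (cosP P b)"
  proof
    fix y assume "y \<in> cosP P (\<lambda>x. a x + b x)"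
    then obtain h where h: "h \<in> P" "y = (\<lambda>x. h x + (a x + b x))" using cosP_memE by blast
    have p: "(\<lambda>x. h x + a x) \<in> cosP P a" by (rule cosP_memI[OF h(1)]) simp
    have q: "b \<in> cosP P b" by (rule cosP_memI[OF addcl_zero[OF P]]) simp
    have "y = (\<lambda>x. (\<lambda>x. h x + a x) x + b x)" using h(2) by (auto simp: algebra_simps)
    hence "y \<in> (\<Union>p\<in>cosP P a. \<Union>q\<in>cosP P b. {(\<lambda>x. p x + q x)})"
      by (intro UN_I[OF p] UN_I[OF q]) simp
    thus "y \<in> set_mult (divisor_grp R) (cosP P a) (cosP P b)" unfolding set_mult_div .
  qed
qed

lemma prin_div_add: "(\<lambda>x. prin_div R m1 x + prin_div R m2 x) = prin_div R (m1 + m2)"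
  and prin_div_diff: "(\<lambda>x. prin_div R m1 x - prin_div R m2 x) = prin_div R (m1 - m2)"
  and prin_div_zero: "prin_div R 0 = (\<lambda>x. 0)"
  by (auto simp: prin_div_def)

lemma addcl_Prin: "addcl (Prin R)"
  unfolding addcl_def Prin_def
proof (intro conjI ballI)
  show "(\<lambda>x. 0) \<in> range (prin_div R)" using prin_div_zero[of R] by (metis rangeI)
next
  fix f g assume f: "f \<in> range (prin_div R)" and g: "g \<in> range (prin_div R)"
  obtain m1 where m1: "f = prin_div R m1" using f by blast
  obtain m2 where m2: "g = prin_div R m2" using g by blast
  show "(\<lambda>x. f x + g x) \<in> range (prin_div R)" unfolding m1 m2 prin_div_add by (rule rangeI)
  show "(\<lambda>x. f x - g x) \<in> range (prin_div R)" unfolding m1 m2 prin_div_diff by (rule rangeI)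
qed

lemma eqcard:
  assumes "\<And>a b. a \<in> A \<Longrightarrow> b \<in> A \<Longrightarrow> f a = f b \<longleftrightarrow> h a = h b"
  shows "card (f ` A) = card (h ` A)"
proof -
  have "bij_betw (\<lambda>y. h (inv_into A f y)) (f ` A) (h ` A)"
  proof (rule bij_betw_imageI)
    show "inj_on (\<lambda>y. h (inv_into A f y)) (f ` A)"
    proof (rule inj_onI)
      fix x y assume x: "x \<in> f ` A" and y: "y \<in> f ` A" and e: "h (inv_into A f x) = h (inv_into A f y)"
      have ix: "inv_into A f x \<in> A" "f (inv_into A f x) = x" using x by (auto intro: inv_into_into f_inv_into_f)
      have iy: "inv_into A f y \<in> A" "f (inv_into A f y) = y" using y by (auto intro: inv_into_into f_inv_into_f)
      show "x = y" using assms[OF ix(1) iy(1)] e ix(2) iy(2) by simp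
    qed
  next
    show "(\<lambda>y. h (inv_into A f y)) ` f ` A = h ` A"
    proof
      show "(\<lambda>y. h (inv_into A f y)) ` f ` A \<subseteq> h ` A" by (auto intro: inv_into_into)
    next
      show "h ` A \<subseteq> (\<lambda>y. h (inv_into A f y)) ` f ` A"
      proof
        fix z assume "z \<in> h ` A"
        then obtain a where a: "a \<in> A" "z = h a" by blast
        have i: "inv_into A f (f a) \<in> A" "f (inv_into A f (f a)) = f a" using a(1) by (auto intro: inv_into_into f_inv_into_f)
        have "h (inv_into A f (f a)) = h a" using assms[OF i(1) a(1)] i(2) by simp
        thus "z \<in> (\<lambda>y. h (inv_into A f y)) ` f ` A" using a by force
      qed
    qed
  qed
  thus ?thesis by (rule bij_betw_same_card)
qed

lemma local_card:
  assumes pu: "primitive u" and pv: "primitive v" and d: "det2 u v > 0"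
  shows "card (carrier (local_Cl_grp (u, v))) = nat (det2 u v)"
proof -
  let ?G = "divisor_grp {u, v}"
  let ?P = "Prin {u, v}"
  let ?f = "\<lambda>D::lat \<Rightarrow> int. (D u - D v * pair (wv v) u) mod det2 u v"
  have uv: "u \<noteq> v" using d by auto
  have car: "carrier (local_Cl_grp (u, v)) = cosP ?P ` carrier ?G"
    unfolding local_Cl_grp_def FactGroup_def RCOSETS_def r_coset_div by (simp add: UNION_singleton_eq_range)
  have key: "cosP ?P a = cosP ?P b \<longleftrightarrow> ?f a = ?f b" if a: "a \<in> carrier ?G" and b: "b \<in> carrier ?G" for a b
  proof -
    have "cosP ?P a = cosP ?P b \<longleftrightarrow> (\<lambda>x. a x - b x) \<in> ?P" by (rule cosP_eq[OF addcl_Prin])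
    also have "\<dots> \<longleftrightarrow> (\<exists>m. (\<lambda>x. a x - b x) = prin_div {u, v} m)" unfolding Prin_def by auto
    also have "\<dots> \<longleftrightarrow> (\<exists>m. a u - b u = pair m u \<and> a v - b v = pair m v)"
    proof
      assume "\<exists>m. (\<lambda>x. a x - b x) = prin_div {u, v} m"
      then obtain m where m: "(\<lambda>x. a x - b x) = prin_div {u, v} m" by blast
      have "a u - b u = pair m u" using fun_cong[OF m, of u] by (simp add: prin_div_def)
      moreover have "a v - b v = pair m v" using fun_cong[OF m, of v] by (simp add: prin_div_def)
      ultimately show "\<exists>m. a u - b u = pair m u \<and> a v - b v = pair m v" by blast
    next
      assume "\<exists>m. a u - b u = pair m u \<and> a v - b v = pair m v"
      then obtain m where m: "a u - b u = pair m u" "a v - b v = pair m v" by blast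
      have "(\<lambda>x. a x - b x) = prin_div {u, v} m"
      proof
        fix x show "a x - b x = prin_div {u, v} m x"
        proof (cases "x = u \<or> x = v")
          case True then show ?thesis using m by (auto simp: prin_div_def)
        next
          case False
          have "a x = 0" using a False unfolding carrier_div by blast
          moreover have "b x = 0" using b False unfolding carrier_div by blast
          ultimately show ?thesis using False by (simp add: prin_div_def)
        qed
      qed
      thus "\<exists>m. (\<lambda>x. a x - b x) = prin_div {u, v} m" by blast
    qed
    also have "\<dots> \<longleftrightarrow> det2 u v dvd ((a u - b u) - (a v - b v) * pair (wv v) u)" by (rule K1[OF pv])
    also have "\<dots> \<longleftrightarrow> ?f a = ?f b"
      by (simp add: mod_eq_dvd_iff algebra_simps)
    finally show ?thesis .
  qed
  have "card (carrier (local_Cl_grp (u, v))) = card (?f ` carrier ?G)"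
    unfolding car by (rule eqcard) (rule key)
  also have "?f ` carrier ?G = {0..<det2 u v}"
  proof
    show "?f ` carrier ?G \<subseteq> {0..<det2 u v}" using d by (auto intro: pos_mod_sign pos_mod_bound)
  next
    show "{0..<det2 u v} \<subseteq> ?f ` carrier ?G"
    proof
      fix r assume r: "r \<in> {0..<det2 u v}"
      let ?D = "\<lambda>x. if x = u then r else 0"
      have Dc: "?D \<in> carrier ?G" unfolding carrier_div by auto
      have "?f ?D = r" using r uv by simp
      thus "r \<in> ?f ` carrier ?G" by (rule image_eqI[OF sym Dc])
    qed
  qed
  finally show ?thesis by simp
qed


locale cyc =
  fixes S :: "(lat \<times> lat) set" and \<rho> :: "nat \<Rightarrow> lat" and n :: nat
  assumes npos: "n > 0"
    and prim: "\<And>i. primitive (\<rho> i)"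
    and dpos: "\<And>i. det2 (\<rho> i) (\<rho> (Suc i)) > 0"
    and per: "\<And>i. \<rho> (i + n) = \<rho> i"
    and rinj: "inj_on \<rho> {..<n}"
    and rays_eq: "rays S = \<rho> ` {..<n}"
    and S_eq: "S = (\<lambda>i. (\<rho> i, \<rho> (Suc i))) ` {..<n}"
begin

definition dd :: "nat \<Rightarrow> int" where "dd i = det2 (\<rho> i) (\<rho> (Suc i))"
definition tt :: "nat \<Rightarrow> int" where "tt i = pair (wv (\<rho> (Suc i))) (\<rho> i)"
definition Div :: "(lat \<Rightarrow> int) set" where "Div = carrier (divisor_grp (rays S))"
definition Phi :: "(lat \<Rightarrow> int) \<Rightarrow> nat \<Rightarrow> int" where
  "Phi D = restrict (\<lambda>i. (D (\<rho> i) - D (\<rho> (Suc i)) * tt i) mod dd i) {..<n}"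

lemma dd_pos: "dd i > 0" by (simp add: dd_def dpos)

lemma Div_iff: "D \<in> Div \<longleftrightarrow> (\<forall>x. x \<notin> rays S \<longrightarrow> D x = 0)"
  by (simp add: Div_def carrier_div)

lemma TDiv_Div: "TDiv S = Div"
  by (simp add: TDiv_def Div_def carrier_div)

lemma Div_diff: "D1 \<in> Div \<Longrightarrow> D2 \<in> Div \<Longrightarrow> (\<lambda>x. D1 x - D2 x) \<in> Div"
  and Div_add: "D1 \<in> Div \<Longrightarrow> D2 \<in> Div \<Longrightarrow> (\<lambda>x. D1 x + D2 x) \<in> Div"
  by (auto simp: Div_iff)

lemma cone_cond_iff:
  "(\<forall>(u,v)\<in>S. \<exists>m. D u = pair m u \<and> D v = pair m v) \<longleftrightarrow>
   (\<forall>i<n. \<exists>m. D (\<rho> i) = pair m (\<rho> i) \<and> D (\<rho> (Suc i)) = pair m (\<rho> (Suc i)))"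
  unfolding S_eq by auto

lemma cartier_iff:
  assumes D: "D \<in> Div"
  shows "cartier S D \<longleftrightarrow> (\<forall>i<n. dd i dvd (D (\<rho> i) - D (\<rho> (Suc i)) * tt i))"
proof -
  have "cartier S D \<longleftrightarrow> (\<forall>i<n. \<exists>m. D (\<rho> i) = pair m (\<rho> i) \<and> D (\<rho> (Suc i)) = pair m (\<rho> (Suc i)))"
    unfolding cartier_def TDiv_Div cone_cond_iff using D by simp
  also have "\<dots> \<longleftrightarrow> (\<forall>i<n. dd i dvd (D (\<rho> i) - D (\<rho> (Suc i)) * tt i))"
    unfolding dd_def tt_def using K1[OF prim] by simp
  finally show ?thesis .
qed

lemma cartier_Div: "cartier S D \<Longrightarrow> D \<in> Div"
  by (simp add: cartier_def TDiv_Div)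

lemma cartier_add: "cartier S D1 \<Longrightarrow> cartier S D2 \<Longrightarrow> cartier S (\<lambda>x. D1 x + D2 x)"
  and cartier_diff: "cartier S D1 \<Longrightarrow> cartier S D2 \<Longrightarrow> cartier S (\<lambda>x. D1 x - D2 x)"
proof -
  assume c1: "cartier S D1" and c2: "cartier S D2"
  have D1: "D1 \<in> Div" and D2: "D2 \<in> Div" using c1 c2 cartier_Div by auto
  have h1: "\<forall>i<n. dd i dvd (D1 (\<rho> i) - D1 (\<rho> (Suc i)) * tt i)" using c1 cartier_iff[OF D1] by simp
  have h2: "\<forall>i<n. dd i dvd (D2 (\<rho> i) - D2 (\<rho> (Suc i)) * tt i)" using c2 cartier_iff[OF D2] by simp
  have "\<forall>i<n. dd i dvd ((D1 (\<rho> i) + D2 (\<rho> i)) - (D1 (\<rho> (Suc i)) + D2 (\<rho> (Suc i))) * tt i)"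
  proof (intro allI impI)
    fix i assume i: "i < n"
    have "(D1 (\<rho> i) + D2 (\<rho> i)) - (D1 (\<rho> (Suc i)) + D2 (\<rho> (Suc i))) * tt i
      = (D1 (\<rho> i) - D1 (\<rho> (Suc i)) * tt i) + (D2 (\<rho> i) - D2 (\<rho> (Suc i)) * tt i)" (is "_ = ?r")
      by (simp add: algebra_simps)
    moreover have "dd i dvd ?r" by (rule dvd_add) (use h1 h2 i in auto)
    ultimately show "dd i dvd ((D1 (\<rho> i) + D2 (\<rho> i)) - (D1 (\<rho> (Suc i)) + D2 (\<rho> (Suc i))) * tt i)"
      by (simp only:)
  qed
  thus "cartier S (\<lambda>x. D1 x + D2 x)" using cartier_iff[OF Div_add[OF D1 D2]] by simp
  have "\<forall>i<n. dd i dvd ((D1 (\<rho> i) - D2 (\<rho> i)) - (D1 (\<rho> (Suc i)) - D2 (\<rho> (Suc i))) * tt i)"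
  proof (intro allI impI)
    fix i assume i: "i < n"
    have "(D1 (\<rho> i) - D2 (\<rho> i)) - (D1 (\<rho> (Suc i)) - D2 (\<rho> (Suc i))) * tt i
      = (D1 (\<rho> i) - D1 (\<rho> (Suc i)) * tt i) - (D2 (\<rho> i) - D2 (\<rho> (Suc i)) * tt i)" (is "_ = ?r")
      by (simp add: algebra_simps)
    moreover have "dd i dvd ?r" by (rule dvd_diff) (use h1 h2 i in auto)
    ultimately show "dd i dvd ((D1 (\<rho> i) - D2 (\<rho> i)) - (D1 (\<rho> (Suc i)) - D2 (\<rho> (Suc i))) * tt i)"
      by (simp only:)
  qed
  thus "cartier S (\<lambda>x. D1 x - D2 x)" using cartier_iff[OF Div_diff[OF D1 D2]] by simp
qed

lemma rho_per_mult: "\<rho> (k + m * n) = \<rho> k"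
proof (induction m)
  case 0 then show ?case by simp
next
  case (Suc m)
  have e: "k + Suc m * n = (k + m * n) + n" by simp
  show ?case unfolding e per by (rule Suc.IH)
qed

lemma rho_mod: "\<rho> (i mod n) = \<rho> i"
  using rho_per_mult[of "i mod n" "i div n"] by (simp add: mod_div_mult_eq)

lemma rho_rays: "\<rho> i \<in> rays S"
proof -
  have "i mod n < n" using npos by simp
  hence "\<rho> (i mod n) \<in> rays S" using rays_eq by simp
  thus ?thesis by (simp add: rho_mod)
qed

lemma prin_cartier: "cartier S (prin_div (rays S) m)"
proof -
  have D: "prin_div (rays S) m \<in> Div" by (simp add: Div_iff prin_div_def)
  have "\<forall>i<n. \<exists>m'. prin_div (rays S) m (\<rho> i) = pair m' (\<rho> i) \<and>
            prin_div (rays S) m (\<rho> (Suc i)) = pair m' (\<rho> (Suc i))"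
    using rho_rays by (intro allI impI exI[of _ m]) (simp add: prin_div_def)
  thus ?thesis unfolding cartier_def TDiv_Div cone_cond_iff using D by simp
qed

lemma Prin_cartier: "P \<in> Prin (rays S) \<Longrightarrow> cartier S P"
  unfolding Prin_def using prin_cartier by blast

lemma cartier_zero: "cartier S (\<lambda>x. 0)"
  using prin_cartier[of 0] by (simp add: prin_div_zero)

lemma Phi_eq_iff:
  assumes "D1 \<in> Div" "D2 \<in> Div"
  shows "Phi D1 = Phi D2 \<longleftrightarrow> cartier S (\<lambda>x. D1 x - D2 x)"
proof -
  have "Phi D1 = Phi D2 \<longleftrightarrow> (\<forall>i<n. (D1 (\<rho> i) - D1 (\<rho> (Suc i)) * tt i) mod dd i = (D2 (\<rho> i) - D2 (\<rho> (Suc i)) * tt i) mod dd i)"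
    unfolding Phi_def by (auto simp: fun_eq_iff restrict_def)
  also have "\<dots> \<longleftrightarrow> (\<forall>i<n. dd i dvd ((D1 (\<rho> i) - D2 (\<rho> i)) - (D1 (\<rho> (Suc i)) - D2 (\<rho> (Suc i))) * tt i))"
    by (simp add: mod_eq_dvd_iff algebra_simps)
  also have "\<dots> \<longleftrightarrow> cartier S (\<lambda>x. D1 x - D2 x)"
    using cartier_iff[OF Div_diff[OF assms]] by simp
  finally show ?thesis .
qed

definition Psi :: "(lat \<Rightarrow> int) \<Rightarrow> (lat \<Rightarrow> int) set set" where
  "Psi D = (\<lambda>E. cosP (Prin (rays S)) (\<lambda>x. E x + D x)) ` {E. cartier S E}"

lemma Psi_eq_iff:
  assumes D1: "D1 \<in> Div" and D2: "D2 \<in> Div"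
  shows "Psi D1 = Psi D2 \<longleftrightarrow> cartier S (\<lambda>x. D1 x - D2 x)"
proof
  let ?P = "Prin (rays S)"
  assume e: "Psi D1 = Psi D2"
  have "cosP ?P (\<lambda>x. (\<lambda>x. 0) x + D1 x) \<in> Psi D1" unfolding Psi_def
    by (rule imageI) (simp add: cartier_zero)
  hence "cosP ?P D1 \<in> Psi D2" using e by simp
  then obtain E where E: "cartier S E" "cosP ?P D1 = cosP ?P (\<lambda>x. E x + D2 x)"
    unfolding Psi_def by blast
  have "(\<lambda>x. D1 x - (E x + D2 x)) \<in> ?P" using E(2) unfolding cosP_eq[OF addcl_Prin] .
  hence c: "cartier S (\<lambda>x. D1 x - (E x + D2 x))" by (rule Prin_cartier)
  have "cartier S (\<lambda>x. (D1 x - (E x + D2 x)) + E x)" by (rule cartier_add[OF c E(1)])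
  moreover have "(\<lambda>x. (D1 x - (E x + D2 x)) + E x) = (\<lambda>x. D1 x - D2 x)" by auto
  ultimately show "cartier S (\<lambda>x. D1 x - D2 x)" by simp
next
  let ?P = "Prin (rays S)"
  assume c: "cartier S (\<lambda>x. D1 x - D2 x)"
  show "Psi D1 = Psi D2"
  proof
    show "Psi D1 \<subseteq> Psi D2"
    proof
      fix y assume "y \<in> Psi D1"
      then obtain E where E: "cartier S E" "y = cosP ?P (\<lambda>x. E x + D1 x)" unfolding Psi_def by blast
      have E': "cartier S (\<lambda>x. E x + (D1 x - D2 x))" by (rule cartier_add[OF E(1) c])
      have "y = cosP ?P (\<lambda>x. (\<lambda>x. E x + (D1 x - D2 x)) x + D2 x)" using E(2) by simp
      thus "y \<in> Psi D2" unfolding Psi_def using E' by (intro image_eqI) auto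
    qed
  next
    show "Psi D2 \<subseteq> Psi D1"
    proof
      fix y assume "y \<in> Psi D2"
      then obtain E where E: "cartier S E" "y = cosP ?P (\<lambda>x. E x + D2 x)" unfolding Psi_def by blast
      have E': "cartier S (\<lambda>x. E x - (D1 x - D2 x))" by (rule cartier_diff[OF E(1) c])
      have "y = cosP ?P (\<lambda>x. (\<lambda>x. E x - (D1 x - D2 x)) x + D1 x)" using E(2) by simp
      thus "y \<in> Psi D1" unfolding Psi_def using E' by (intro image_eqI) auto
    qed
  qed
qed

lemma carrier_Cl: "carrier (Cl_grp S) = cosP (Prin (rays S)) ` Div"
  unfolding Cl_grp_def FactGroup_def RCOSETS_def r_coset_div Div_def
  by (simp add: UNION_singleton_eq_range)

lemma Pic_eq: "Pic_sub S = (\<lambda>E. cosP (Prin (rays S)) E) ` {E. cartier S E}"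
  unfolding Pic_sub_def r_coset_div by blast

lemma r_coset_Cl: "D \<in> Div \<Longrightarrow> r_coset (Cl_grp S) (Pic_sub S) (cosP (Prin (rays S)) D) = Psi D"
proof -
  assume D: "D \<in> Div"
  have "r_coset (Cl_grp S) (Pic_sub S) (cosP (Prin (rays S)) D)
      = (\<Union>h\<in>Pic_sub S. {set_mult (divisor_grp (rays S)) h (cosP (Prin (rays S)) D)})"
    unfolding r_coset_def Cl_grp_def FactGroup_def by simp
  also have "\<dots> = (\<lambda>h. set_mult (divisor_grp (rays S)) h (cosP (Prin (rays S)) D)) ` Pic_sub S"
    by (simp add: UNION_singleton_eq_range)
  also have "\<dots> = (\<lambda>E. set_mult (divisor_grp (rays S)) (cosP (Prin (rays S)) E) (cosP (Prin (rays S)) D)) ` {E. cartier S E}"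
    unfolding Pic_eq image_image ..
  also have "\<dots> = Psi D"
    unfolding Psi_def set_mult_cosP[OF addcl_Prin] ..
  finally show ?thesis .
qed

lemma Pic_index: "card (rcosets\<^bsub>Cl_grp S\<^esub> (Pic_sub S)) = card (Phi ` Div)"
proof -
  have "rcosets\<^bsub>Cl_grp S\<^esub> (Pic_sub S) = (\<lambda>C. r_coset (Cl_grp S) (Pic_sub S) C) ` carrier (Cl_grp S)"
    unfolding RCOSETS_def by (simp add: UNION_singleton_eq_range)
  also have "\<dots> = (\<lambda>D. r_coset (Cl_grp S) (Pic_sub S) (cosP (Prin (rays S)) D)) ` Div"
    unfolding carrier_Cl image_image ..
  also have "\<dots> = Psi ` Div"
    using r_coset_Cl by (intro image_cong) auto
  finally have e: "rcosets\<^bsub>Cl_grp S\<^esub> (Pic_sub S) = Psi ` Div" .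
  have "card (Psi ` Div) = card (Phi ` Div)"
    by (rule eqcard) (simp add: Psi_eq_iff Phi_eq_iff)
  thus ?thesis using e by simp
qed

end


lemma shift_sum:
  fixes h :: "nat \<Rightarrow> 'a::ab_group_add"
  assumes "h n = h 0"
  shows "(\<Sum>i<n. h (Suc i)) = (\<Sum>i<n. h i)"
proof -
  have "(\<Sum>i<Suc n. h i) = h 0 + (\<Sum>i<n. h (Suc i))" by (rule sum.lessThan_Suc_shift)
  moreover have "(\<Sum>i<Suc n. h i) = (\<Sum>i<n. h i) + h n" by simp
  ultimately show ?thesis using assms by (simp add: algebra_simps)
qed

lemma smul_neg: "smul (- k) x = - smul k x"
  by (simp add: smul_def)

lemma smul_sum_left: "smul (\<Sum>i\<in>A. f i) x = (\<Sum>i\<in>A. smul (f i) x)"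
  by (induction A rule: infinite_finite_induct) (auto simp: smul_add2)

lemma smul_sum_right: "smul k (\<Sum>i\<in>A. f i) = (\<Sum>i\<in>A. smul k (f i))"
  by (induction A rule: infinite_finite_induct) (auto simp: smul_add)

lemma rot_zero: "rot 0 = 0"
  by (simp add: rot_def zero_prod_def)

lemma pair_neg [simp]: "pair (- x) r = - pair x r"
  by (simp add: pair_def)

lemma rot_sum: "rot (\<Sum>i\<in>A. f i) = (\<Sum>i\<in>A. rot (f i))"
  by (induction A rule: infinite_finite_induct) (simp_all add: rot_add rot_zero)

lemma grp2_sum: "grp2 H \<Longrightarrow> (\<And>i. i \<in> A \<Longrightarrow> f i \<in> H) \<Longrightarrow> (\<Sum>i\<in>A. f i) \<in> H"
  by (induction A rule: infinite_finite_induct) (auto intro: grp2_add grp2_zero)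

lemma grp2_neg: "grp2 H \<Longrightarrow> x \<in> H \<Longrightarrow> - x \<in> H"
  using grp2_diff[of H 0 x] grp2_zero by auto

lemma mod_unique_eq:
  fixes x y d :: int
  assumes "0 \<le> x" "x < d" "0 \<le> y" "y < d" "x mod d = y mod d"
  shows "x = y"
  using assms by simp

context cyc
begin

definition Nsp :: "lat set" where "Nsp = {(\<Sum>i<n. smul (k i) (\<rho> i)) | k. True}"

lemma NspI: "x = (\<Sum>i<n. smul (k i) (\<rho> i)) \<Longrightarrow> x \<in> Nsp"
  unfolding Nsp_def mem_Collect_eq by (rule exI[of _ k]) simp

lemma grp2_Nsp: "grp2 Nsp"
  unfolding grp2_def
proof (intro conjI ballI)
  show "0 \<in> Nsp" by (rule NspI[of _ "\<lambda>i. 0"]) simp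
next
  fix x y assume x: "x \<in> Nsp" and y: "y \<in> Nsp"
  obtain k where k: "x = (\<Sum>i<n. smul (k i) (\<rho> i))" using x unfolding Nsp_def by blast
  obtain l where l: "y = (\<Sum>i<n. smul (l i) (\<rho> i))" using y unfolding Nsp_def by blast
  have "x + y = (\<Sum>i<n. smul (k i + l i) (\<rho> i))" unfolding k l by (simp add: smul_add2 sum.distrib)
  thus "x + y \<in> Nsp" by (rule NspI)
  have "x - y = (\<Sum>i<n. smul (k i - l i) (\<rho> i))" unfolding k l by (simp add: smul_diff2 sum_subtractf)
  thus "x - y \<in> Nsp" by (rule NspI)
qed

lemma rho_Nsp: "\<rho> i \<in> Nsp"
proof -
  have im: "i mod n < n" using npos by simp
  have "(\<Sum>j<n. smul (if j = i mod n then 1 else 0) (\<rho> j)) = (\<Sum>j<n. if j = i mod n then \<rho> j else 0)"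
    by (rule sum.cong) auto
  also have "\<dots> = \<rho> (i mod n)" using im by simp
  finally have "\<rho> i = (\<Sum>j<n. smul (if j = i mod n then 1 else 0) (\<rho> j))" by (simp add: rho_mod)
  thus ?thesis by (rule NspI)
qed

lemma exists_hnf: "\<exists>a b c. a > 0 \<and> c > 0 \<and> Nsp = span2 (a, 0) (b, c)"
proof -
  have "det2 (\<rho> 0) (\<rho> (Suc 0)) \<noteq> 0" using dpos[of 0] by simp
  from hnf[OF grp2_Nsp rho_Nsp rho_Nsp this] show ?thesis by (elim exE conjE) (intro exI conjI, assumption+)
qed

end

locale cycb = cyc +
  fixes a b c :: int
  assumes apos: "a > 0" and cpos: "c > 0" and Nsp_eq: "Nsp = span2 (a, 0) (b, c)"
begin

definition LL :: "lat set" where "LL = span2 (rot (a, 0)) (rot (b, c))"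
definition ww :: "nat \<Rightarrow> lat" where "ww i = wv (\<rho> i)"
definition theta :: "(nat \<Rightarrow> int) \<Rightarrow> lat" where "theta \<delta> = (\<Sum>i<n. smul (\<delta> i) (ww i))"

lemma grp2_LL: "grp2 LL" unfolding LL_def by (rule grp2_span2)

lemma rot_LL: "x \<in> Nsp \<Longrightarrow> rot x \<in> LL"
proof -
  assume "x \<in> Nsp"
  then obtain p q where x: "x = smul p (a, 0) + smul q (b, c)" unfolding Nsp_eq span2_def by blast
  have "rot x = smul p (rot (a, 0)) + smul q (rot (b, c))" unfolding x by (simp add: rot_add rot_smul)
  thus "rot x \<in> LL" unfolding LL_def span2_def by blast
qed

lemma rot_rho_LL: "rot (\<rho> i) \<in> LL" by (rule rot_LL[OF rho_Nsp])

lemma ww_pair: "pair (ww i) (\<rho> i) = 1" unfolding ww_def by (rule wv[OF prim])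

lemma PW_LL: "m - smul (pair m (\<rho> i)) (ww i) \<in> LL"
proof -
  obtain k where "m - smul (pair m (\<rho> i)) (ww i) = smul k (rot (\<rho> i))"
    using PW[OF prim[of i], of m] unfolding ww_def by blast
  thus ?thesis using grp2_smul[OF grp2_LL rot_rho_LL] by simp
qed

lemma dd_LL: "smul (dd 0) y \<in> LL"
proof -
  have "smul (det2 (rot (\<rho> 0)) (rot (\<rho> (Suc 0)))) y
      = smul (det2 y (rot (\<rho> (Suc 0)))) (rot (\<rho> 0)) + smul (det2 (rot (\<rho> 0)) y) (rot (\<rho> (Suc 0)))"
    by (rule cramer)
  moreover have "det2 (rot (\<rho> 0)) (rot (\<rho> (Suc 0))) = dd 0" by (simp add: dd_def)
  ultimately have e: "smul (dd 0) y = smul (det2 y (rot (\<rho> (Suc 0)))) (rot (\<rho> 0)) + smul (det2 (rot (\<rho> 0)) y) (rot (\<rho> (Suc 0)))"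
    by simp
  show ?thesis unfolding e
    by (intro grp2_add[OF grp2_LL] grp2_smul[OF grp2_LL] rot_rho_LL)
qed

lemma LL_decomp:
  assumes z: "z \<in> LL"
  shows "\<exists>lam. z = (\<Sum>i<n. smul (lam i) (rot (\<rho> i)))"
proof -
  have "(a, 0) \<in> Nsp" "(b, c) \<in> Nsp" unfolding Nsp_eq by (rule span2_gen1, rule span2_gen2)
  then obtain k l where k: "(a, 0) = (\<Sum>i<n. smul (k i) (\<rho> i))" and l: "(b, c) = (\<Sum>i<n. smul (l i) (\<rho> i))"
    unfolding Nsp_def by blast
  obtain p q where pq: "z = smul p (rot (a, 0)) + smul q (rot (b, c))" using z unfolding LL_def span2_def by blast
  have "z = smul p (\<Sum>i<n. smul (k i) (rot (\<rho> i))) + smul q (\<Sum>i<n. smul (l i) (rot (\<rho> i)))"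
    unfolding pq k l rot_sum by (simp add: rot_smul)
  also have "\<dots> = (\<Sum>i<n. smul (p * k i + q * l i) (rot (\<rho> i)))"
    by (simp add: smul_sum_right smul_smul smul_add2 sum.distrib)
  finally have zz: "z = (\<Sum>i<n. smul (p * k i + q * l i) (rot (\<rho> i)))" .
  show ?thesis by (rule exI[of _ "\<lambda>i. p * k i + q * l i"]) (rule zz)
qed

lemma theta_diff: "theta (\<lambda>i. x i - y i) = theta x - theta y"
  unfolding theta_def by (simp add: smul_diff2 sum_subtractf)

lemma meq:
  "theta \<delta> \<in> LL \<longleftrightarrow> (\<exists>D\<in>Div. \<forall>i<n. dd i dvd (\<delta> i - D (\<rho> i) + D (\<rho> (Suc i)) * tt i))"
proof
  assume th: "theta \<delta> \<in> LL"
  obtain lam where lam: "theta \<delta> = (\<Sum>i<n. smul (lam i) (rot (\<rho> i)))" using LL_decomp[OF th] by blast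
  define e where "e i = smul (\<delta> i) (ww i) - smul (lam i) (rot (\<rho> i))" for i
  have esum: "(\<Sum>i<n. e i) = 0"
    unfolding e_def sum_subtractf using lam by (simp add: theta_def)
  have epair: "pair (e i) (\<rho> i) = \<delta> i" for i
    unfolding e_def by (simp add: ww_pair)
  define M where "M k = (\<Sum>j<k. e (Suc j))" for k
  have MSuc: "M (Suc k) = M k + e (Suc k)" for k by (simp add: M_def)
  define idx where "idx r = the_inv_into {..<n} \<rho> r" for r
  define D where "D r = (if r \<in> rays S then \<delta> (idx r) - pair (M (idx r)) r else 0)" for r
  have DDiv: "D \<in> Div" unfolding Div_iff D_def by simp
  have Drho: "D (\<rho> i) = \<delta> i - pair (M i) (\<rho> i)" if i: "i < n" for i
  proof -
    have "idx (\<rho> i) = i" unfolding idx_def using the_inv_into_f_f[OF rinj] i by simp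
    thus ?thesis unfolding D_def using rho_rays by simp
  qed
  have "\<forall>i<n. dd i dvd (\<delta> i - D (\<rho> i) + D (\<rho> (Suc i)) * tt i)"
  proof (intro allI impI)
    fix i assume i: "i < n"
    have x: "\<delta> i - D (\<rho> i) = pair (M i) (\<rho> i)" using Drho[OF i] by simp
    have y: "- D (\<rho> (Suc i)) = pair (M i) (\<rho> (Suc i))"
    proof (cases "Suc i < n")
      case True
      have "D (\<rho> (Suc i)) = \<delta> (Suc i) - pair (M (Suc i)) (\<rho> (Suc i))" by (rule Drho[OF True])
      also have "\<dots> = - pair (M i) (\<rho> (Suc i))" unfolding MSuc by (simp add: epair)
      finally show ?thesis by simp
    next
      case False
      hence ni: "n = Suc i" using i by simp
      have r: "\<rho> (Suc i) = \<rho> 0" using per[of 0] ni by simp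
      have "D (\<rho> 0) = \<delta> 0" using Drho[of 0] npos by (simp add: M_def)
      moreover have "M i = - e 0"
      proof -
        have "(\<Sum>j<Suc i. e j) = e 0 + (\<Sum>j<i. e (Suc j))" by (rule sum.lessThan_Suc_shift)
        hence "0 = e 0 + M i" using esum ni by (simp add: M_def)
        thus ?thesis by (simp add: eq_neg_iff_add_eq_0 add.commute)
      qed
      ultimately show ?thesis using r epair[of 0] by simp
    qed
    have "det2 (\<rho> i) (\<rho> (Suc i)) dvd ((\<delta> i - D (\<rho> i)) - (- D (\<rho> (Suc i))) * pair (wv (\<rho> (Suc i))) (\<rho> i))"
      using K1[OF prim[of "Suc i"], of "\<delta> i - D (\<rho> i)" "\<rho> i" "- D (\<rho> (Suc i))"] x y by blast
    thus "dd i dvd (\<delta> i - D (\<rho> i) + D (\<rho> (Suc i)) * tt i)" by (simp add: dd_def tt_def)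
  qed
  thus "\<exists>D\<in>Div. \<forall>i<n. dd i dvd (\<delta> i - D (\<rho> i) + D (\<rho> (Suc i)) * tt i)" using DDiv by blast
next
  assume "\<exists>D\<in>Div. \<forall>i<n. dd i dvd (\<delta> i - D (\<rho> i) + D (\<rho> (Suc i)) * tt i)"
  then obtain D where D: "D \<in> Div" "\<forall>i<n. dd i dvd (\<delta> i - D (\<rho> i) + D (\<rho> (Suc i)) * tt i)" by blast
  have "\<forall>i. \<exists>m. i < n \<longrightarrow> (\<delta> i - D (\<rho> i) = pair m (\<rho> i) \<and> - D (\<rho> (Suc i)) = pair m (\<rho> (Suc i)))"
  proof (intro allI)
    fix i
    show "\<exists>m. i < n \<longrightarrow> (\<delta> i - D (\<rho> i) = pair m (\<rho> i) \<and> - D (\<rho> (Suc i)) = pair m (\<rho> (Suc i)))"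
    proof (cases "i < n")
      case True
      have "det2 (\<rho> i) (\<rho> (Suc i)) dvd ((\<delta> i - D (\<rho> i)) - (- D (\<rho> (Suc i))) * pair (wv (\<rho> (Suc i))) (\<rho> i))"
        using D(2) True by (simp add: dd_def tt_def)
      then obtain m where "\<delta> i - D (\<rho> i) = pair m (\<rho> i) \<and> - D (\<rho> (Suc i)) = pair m (\<rho> (Suc i))"
        using K1[OF prim[of "Suc i"], of "\<delta> i - D (\<rho> i)" "\<rho> i" "- D (\<rho> (Suc i))"] by blast
      thus ?thesis by blast
    qed simp
  qed
  then obtain M where M: "\<And>i. i < n \<Longrightarrow> \<delta> i - D (\<rho> i) = pair (M i) (\<rho> i) \<and> - D (\<rho> (Suc i)) = pair (M i) (\<rho> (Suc i))"
    using choice[of "\<lambda>i m. i < n \<longrightarrow> (\<delta> i - D (\<rho> i) = pair m (\<rho> i) \<and> - D (\<rho> (Suc i)) = pair m (\<rho> (Suc i)))"]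
    by blast
  define Q where "Q i = M i - smul (pair (M i) (\<rho> (Suc i))) (ww (Suc i))" for i
  define Q' where "Q' i = M i - smul (pair (M i) (\<rho> i)) (ww i)" for i
  have QL: "Q i - Q' i \<in> LL" for i
  proof -
    have "Q i \<in> LL" unfolding Q_def by (rule PW_LL)
    moreover have "Q' i \<in> LL" unfolding Q'_def by (rule PW_LL)
    ultimately show ?thesis by (rule grp2_diff[OF grp2_LL])
  qed
  have sh: "(\<Sum>i<n. smul (D (\<rho> (Suc i))) (ww (Suc i))) = (\<Sum>i<n. smul (D (\<rho> i)) (ww i))"
    by (rule shift_sum[of "\<lambda>i. smul (D (\<rho> i)) (ww i)"]) (simp add: ww_def per[of 0, simplified])
  have t1: "theta \<delta> = (\<Sum>i<n. smul (D (\<rho> i)) (ww i)) + (\<Sum>i<n. smul (pair (M i) (\<rho> i)) (ww i))"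
  proof -
    have "theta \<delta> = (\<Sum>i<n. smul (D (\<rho> i) + pair (M i) (\<rho> i)) (ww i))"
      unfolding theta_def
    proof (rule sum.cong)
      fix i assume "i \<in> {..<n}"
      hence "\<delta> i = D (\<rho> i) + pair (M i) (\<rho> i)" using M[of i] by simp
      thus "smul (\<delta> i) (ww i) = smul (D (\<rho> i) + pair (M i) (\<rho> i)) (ww i)" by simp
    qed simp
    thus ?thesis by (simp add: smul_add2 sum.distrib)
  qed
  have t2: "(\<Sum>i<n. smul (D (\<rho> (Suc i))) (ww (Suc i))) = - (\<Sum>i<n. smul (pair (M i) (\<rho> (Suc i))) (ww (Suc i)))"
  proof -
    have "(\<Sum>i<n. smul (D (\<rho> (Suc i))) (ww (Suc i))) = (\<Sum>i<n. - smul (pair (M i) (\<rho> (Suc i))) (ww (Suc i)))"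
    proof (rule sum.cong)
      fix i assume "i \<in> {..<n}"
      hence "D (\<rho> (Suc i)) = - pair (M i) (\<rho> (Suc i))" using M by fastforce
      thus "smul (D (\<rho> (Suc i))) (ww (Suc i)) = - smul (pair (M i) (\<rho> (Suc i))) (ww (Suc i))"
        by (simp add: smul_neg)
    qed simp
    thus ?thesis by (simp add: sum_negf)
  qed
  have "(\<Sum>i<n. Q i - Q' i) = (\<Sum>i<n. smul (pair (M i) (\<rho> i)) (ww i)) - (\<Sum>i<n. smul (pair (M i) (\<rho> (Suc i))) (ww (Suc i)))"
    unfolding Q_def Q'_def by (simp add: sum_subtractf)
  also have "\<dots> = theta \<delta>" using t1 t2 sh by simp
  finally have "theta \<delta> = (\<Sum>i<n. Q i - Q' i)" by simp
  thus "theta \<delta> \<in> LL" using grp2_sum[OF grp2_LL QL] by simp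
qed

end


lemma card_fibers:
  assumes "finite A"
  shows "card A = (\<Sum>y\<in>f ` A. card {x\<in>A. f x = y})"
proof -
  have "A = (\<Union>y\<in>f ` A. {x\<in>A. f x = y})" by auto
  hence "card A = card (\<Union>y\<in>f ` A. {x\<in>A. f x = y})" by simp
  also have "\<dots> = (\<Sum>y\<in>f ` A. card {x\<in>A. f x = y})"
    by (rule card_UN_disjoint) (use assms in auto)
  finally show ?thesis .
qed

lemma mod_cond:
  fixes x y z d :: int
  assumes "0 \<le> x" "x < d"
  shows "x = (z + y mod d) mod d \<longleftrightarrow> d dvd (x - z - y)"
proof -
  have "(z + y mod d) mod d = (z + y) mod d" by (simp add: mod_add_right_eq)
  moreover have "x mod d = x" using assms by simp
  ultimately have "x = (z + y mod d) mod d \<longleftrightarrow> x mod d = (z + y) mod d" by simp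
  also have "\<dots> \<longleftrightarrow> d dvd (x - (z + y))" by (rule mod_eq_dvd_iff)
  finally show ?thesis by (simp add: algebra_simps)
qed

context cycb
begin

definition XX :: "(nat \<Rightarrow> int) set" where "XX = PiE {..<n} (\<lambda>i. {0..<dd i})"

definition fL :: "lat \<Rightarrow> int \<times> int" where
  "fL = (SOME f. (\<forall>x y. f x = f y \<longleftrightarrow> x - y \<in> LL) \<and> card (range f) = nat \<bar>a * c\<bar>)"

lemma fL_props: "(\<forall>x y. fL x = fL y \<longleftrightarrow> x - y \<in> LL) \<and> card (range fL) = nat \<bar>a * c\<bar>"
proof -
  have dl: "det2 (rot (a, 0)) (rot (b, c)) = a * c" by (simp add: det2_def)
  have "a * c \<noteq> 0" using apos cpos by simp
  hence "\<exists>f :: lat \<Rightarrow> int \<times> int. (\<forall>x y. f x = f y \<longleftrightarrow> x - y \<in> LL) \<and> card (range f) = nat \<bar>a * c\<bar>"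
    using span2_index[of "rot (a, 0)" "rot (b, c)"] unfolding dl LL_def by simp
  thus ?thesis unfolding fL_def by (rule someI_ex)
qed

lemma fL_eq: "fL x = fL y \<longleftrightarrow> x - y \<in> LL" using fL_props by blast
lemma fL_card: "card (range fL) = nat (a * c)" using fL_props apos cpos by simp

definition FF :: "(nat \<Rightarrow> int) \<Rightarrow> int \<times> int" where "FF \<xi> = fL (theta \<xi>)"

definition tr :: "(nat \<Rightarrow> int) \<Rightarrow> (nat \<Rightarrow> int) \<Rightarrow> nat \<Rightarrow> int" where
  "tr \<xi>' \<psi> = restrict (\<lambda>i. (\<xi>' i + \<psi> i) mod dd i) {..<n}"

lemma finite_XX: "finite XX" unfolding XX_def by (rule finite_PiE) auto

lemma card_XX: "card XX = (\<Prod>i<n. nat (dd i))"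
  unfolding XX_def by (simp add: card_PiE)

lemma Phi_XX: "Phi D \<in> XX"
  unfolding XX_def Phi_def using dd_pos by (auto simp: PiE_def Pi_def)

lemma tr_XX: "tr \<xi>' \<psi> \<in> XX"
  unfolding XX_def tr_def using dd_pos by (auto simp: PiE_def Pi_def)

lemma XX_restrict: "\<xi> \<in> XX \<Longrightarrow> restrict \<xi> {..<n} = \<xi>"
  unfolding XX_def by (rule PiE_restrict)

lemma XX_range: "\<xi> \<in> XX \<Longrightarrow> i < n \<Longrightarrow> 0 \<le> \<xi> i \<and> \<xi> i < dd i"
  unfolding XX_def by (auto simp: PiE_def Pi_def)

lemma tr_eq_iff:
  assumes x: "\<xi> \<in> XX"
  shows "\<xi> = tr \<xi>' (Phi D) \<longleftrightarrow> (\<forall>i<n. dd i dvd (\<xi> i - \<xi>' i - D (\<rho> i) + D (\<rho> (Suc i)) * tt i))"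
proof -
  have "\<xi> = tr \<xi>' (Phi D) \<longleftrightarrow> restrict \<xi> {..<n} = restrict (\<lambda>i. (\<xi>' i + (D (\<rho> i) - D (\<rho> (Suc i)) * tt i) mod dd i) mod dd i) {..<n}"
    unfolding tr_def Phi_def XX_restrict[OF x]
    by (simp add: restrict_def cong: if_cong)
  also have "\<dots> \<longleftrightarrow> (\<forall>i<n. \<xi> i = (\<xi>' i + (D (\<rho> i) - D (\<rho> (Suc i)) * tt i) mod dd i) mod dd i)"
    by (auto simp: fun_eq_iff restrict_def)
  also have "\<dots> \<longleftrightarrow> (\<forall>i<n. dd i dvd (\<xi> i - \<xi>' i - D (\<rho> i) + D (\<rho> (Suc i)) * tt i))"
  proof (intro all_cong1 imp_cong refl)
    fix i assume i: "i < n"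
    have r: "0 \<le> \<xi> i" "\<xi> i < dd i" using XX_range[OF x i] by auto
    show "\<xi> i = (\<xi>' i + (D (\<rho> i) - D (\<rho> (Suc i)) * tt i) mod dd i) mod dd i \<longleftrightarrow>
          dd i dvd (\<xi> i - \<xi>' i - D (\<rho> i) + D (\<rho> (Suc i)) * tt i)"
      using mod_cond[OF r, of "\<xi>' i" "D (\<rho> i) - D (\<rho> (Suc i)) * tt i"] by (simp add: algebra_simps)
  qed
  finally show ?thesis .
qed

lemma fib:
  assumes x: "\<xi> \<in> XX"
  shows "FF \<xi> = FF \<xi>' \<longleftrightarrow> (\<exists>D\<in>Div. \<xi> = tr \<xi>' (Phi D))"
proof -
  have "FF \<xi> = FF \<xi>' \<longleftrightarrow> theta (\<lambda>i. \<xi> i - \<xi>' i) \<in> LL"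
    unfolding FF_def fL_eq theta_diff ..
  also have "\<dots> \<longleftrightarrow> (\<exists>D\<in>Div. \<forall>i<n. dd i dvd (\<xi> i - \<xi>' i - D (\<rho> i) + D (\<rho> (Suc i)) * tt i))"
    by (rule meq)
  also have "\<dots> \<longleftrightarrow> (\<exists>D\<in>Div. \<xi> = tr \<xi>' (Phi D))"
    using tr_eq_iff[OF x] by simp
  finally show ?thesis .
qed

lemma fiber_eq:
  assumes x': "\<xi>' \<in> XX"
  shows "{\<xi> \<in> XX. FF \<xi> = FF \<xi>'} = tr \<xi>' ` (Phi ` Div)"
proof
  show "{\<xi> \<in> XX. FF \<xi> = FF \<xi>'} \<subseteq> tr \<xi>' ` (Phi ` Div)"
  proof
    fix \<xi> assume "\<xi> \<in> {\<xi> \<in> XX. FF \<xi> = FF \<xi>'}"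
    hence "\<xi> \<in> XX" "FF \<xi> = FF \<xi>'" by auto
    then obtain D where "D \<in> Div" "\<xi> = tr \<xi>' (Phi D)" using fib by blast
    thus "\<xi> \<in> tr \<xi>' ` (Phi ` Div)" by blast
  qed
next
  show "tr \<xi>' ` (Phi ` Div) \<subseteq> {\<xi> \<in> XX. FF \<xi> = FF \<xi>'}"
  proof
    fix \<xi> assume "\<xi> \<in> tr \<xi>' ` (Phi ` Div)"
    then obtain D where D: "D \<in> Div" "\<xi> = tr \<xi>' (Phi D)" by blast
    have xX: "\<xi> \<in> XX" using D(2) tr_XX by simp
    have "FF \<xi> = FF \<xi>'" using fib[OF xX] D by blast
    thus "\<xi> \<in> {\<xi> \<in> XX. FF \<xi> = FF \<xi>'}" using xX by simp
  qed
qed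

lemma tr_inj: "inj_on (tr \<xi>') XX"
proof (rule inj_onI)
  fix p q assume p: "p \<in> XX" and q: "q \<in> XX" and e: "tr \<xi>' p = tr \<xi>' q"
  have "p i = q i" if i: "i < n" for i
  proof -
    have "(\<xi>' i + p i) mod dd i = (\<xi>' i + q i) mod dd i" using fun_cong[OF e, of i] i by (simp add: tr_def)
    hence "dd i dvd (\<xi>' i + p i) - (\<xi>' i + q i)" by (simp only: mod_eq_dvd_iff)
    hence "dd i dvd p i - q i" by simp
    hence "p i mod dd i = q i mod dd i" by (simp add: mod_eq_dvd_iff)
    moreover have "p i mod dd i = p i" "q i mod dd i = q i" using XX_range[OF p i] XX_range[OF q i] by simp_all
    ultimately show ?thesis by simp
  qed
  hence "restrict p {..<n} = restrict q {..<n}" by (auto simp: restrict_def)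
  thus "p = q" using XX_restrict[OF p] XX_restrict[OF q] by simp
qed

lemma Phi_Div_XX: "Phi ` Div \<subseteq> XX" using Phi_XX by blast

lemma fiber_card: "\<xi>' \<in> XX \<Longrightarrow> card {\<xi> \<in> XX. FF \<xi> = FF \<xi>'} = card (Phi ` Div)"
  unfolding fiber_eq by (rule card_image[OF inj_on_subset[OF tr_inj Phi_Div_XX]])

lemma FF_surj: "FF ` XX = range fL"
proof
  show "FF ` XX \<subseteq> range fL" unfolding FF_def by blast
next
  show "range fL \<subseteq> FF ` XX"
  proof
    fix y assume "y \<in> range fL"
    then obtain m where m: "y = fL m" by blast
    define r where "r = pair m (\<rho> 0) mod dd 0"
    define \<xi> where "\<xi> = restrict (\<lambda>i. if i = 0 then r else 0) {..<n}"
    have xX: "\<xi> \<in> XX" unfolding \<xi>_def XX_def r_def using dd_pos by (auto simp: PiE_def Pi_def)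
    have "theta \<xi> = (\<Sum>i<n. if i = 0 then smul r (ww 0) else 0)"
      unfolding theta_def \<xi>_def by (rule sum.cong) auto
    also have "\<dots> = smul r (ww 0)" using npos by simp
    finally have th: "theta \<xi> = smul r (ww 0)" .
    obtain k where k: "r - pair m (\<rho> 0) = dd 0 * k"
      unfolding r_def using dd_pos[of 0] by (metis mod_mod_trivial mod_eq_dvd_iff dvdE)
    have "theta \<xi> - m = smul (dd 0) (smul k (ww 0)) - (m - smul (pair m (\<rho> 0)) (ww 0))"
    proof -
      have "smul r (ww 0) = smul (r - pair m (\<rho> 0)) (ww 0) + smul (pair m (\<rho> 0)) (ww 0)"
        by (simp add: smul_diff2)
      also have "\<dots> = smul (dd 0) (smul k (ww 0)) + smul (pair m (\<rho> 0)) (ww 0)" unfolding k by (simp add: smul_smul)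
      finally show ?thesis unfolding th by simp
    qed
    also have "\<dots> \<in> LL" by (intro grp2_diff[OF grp2_LL] dd_LL PW_LL)
    finally have "fL (theta \<xi>) = fL m" using fL_eq by blast
    thus "y \<in> FF ` XX" unfolding m FF_def using xX by (intro image_eqI[OF sym]) auto
  qed
qed

lemma count: "(\<Prod>i<n. nat (dd i)) = nat (a * c) * card (Phi ` Div)"
proof -
  have "card XX = (\<Sum>y\<in>FF ` XX. card {\<xi>\<in>XX. FF \<xi> = y})" by (rule card_fibers[OF finite_XX])
  also have "\<dots> = (\<Sum>y\<in>FF ` XX. card (Phi ` Div))"
  proof (rule sum.cong)
    fix y assume "y \<in> FF ` XX"
    then obtain \<xi>' where "\<xi>' \<in> XX" "y = FF \<xi>'" by blast
    thus "card {\<xi>\<in>XX. FF \<xi> = y} = card (Phi ` Div)" using fiber_card by simp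
  qed simp
  also have "\<dots> = card (FF ` XX) * card (Phi ` Div)" by simp
  also have "\<dots> = nat (a * c) * card (Phi ` Div)" unfolding FF_surj fL_card ..
  finally show ?thesis unfolding card_XX .
qed

end


lemma pair_add2: "pair m (x + y) = pair m x + pair m y"
  and pair_smul2: "pair m (smul k x) = k * pair m x"
  by (simp_all add: pair_def algebra_simps)

lemma pair_zero2: "pair m 0 = 0"
  by (simp add: pair_def)

lemma pair_sum2: "pair m (\<Sum>i\<in>A. f i) = (\<Sum>i\<in>A. pair m (f i))"
  by (induction A rule: infinite_finite_induct) (simp_all add: pair_add2 pair_zero2)

lemma cosP_zero: "cosP P (\<lambda>x. 0) = P"
  unfolding cosP_def by simp

context cycb
begin

definition ka :: "nat \<Rightarrow> int" where "ka = (SOME k. (a, 0) = (\<Sum>i<n. smul (k i) (\<rho> i)))"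
definition kb :: "nat \<Rightarrow> int" where "kb = (SOME k. (b, c) = (\<Sum>i<n. smul (k i) (\<rho> i)))"

lemma ka_eq: "(a, 0) = (\<Sum>i<n. smul (ka i) (\<rho> i))"
proof -
  have "(a, 0) \<in> Nsp" unfolding Nsp_eq by (rule span2_gen1)
  hence "\<exists>k. (a, 0) = (\<Sum>i<n. smul (k i) (\<rho> i))" unfolding Nsp_def by blast
  thus ?thesis unfolding ka_def by (rule someI_ex)
qed

lemma kb_eq: "(b, c) = (\<Sum>i<n. smul (kb i) (\<rho> i))"
proof -
  have "(b, c) \<in> Nsp" unfolding Nsp_eq by (rule span2_gen2)
  hence "\<exists>k. (b, c) = (\<Sum>i<n. smul (k i) (\<rho> i))" unfolding Nsp_def by blast
  thus ?thesis unfolding kb_def by (rule someI_ex)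
qed

definition tau :: "(lat \<Rightarrow> int) \<Rightarrow> lat" where
  "tau D = ((\<Sum>i<n. ka i * D (\<rho> i)), (\<Sum>i<n. kb i * D (\<rho> i)))"

definition AA :: "lat set" where "AA = span2 (a, b) (0, c)"

definition fA :: "lat \<Rightarrow> int \<times> int" where
  "fA = (SOME f. (\<forall>x y. f x = f y \<longleftrightarrow> x - y \<in> AA) \<and> card (range f) = nat \<bar>a * c\<bar>)"

lemma fA_props: "(\<forall>x y. fA x = fA y \<longleftrightarrow> x - y \<in> AA) \<and> card (range fA) = nat \<bar>a * c\<bar>"
proof -
  have dl: "det2 (a, b) (0, c) = a * c" by (simp add: det2_def)
  have "a * c \<noteq> 0" using apos cpos by simp
  hence "\<exists>f :: lat \<Rightarrow> int \<times> int. (\<forall>x y. f x = f y \<longleftrightarrow> x - y \<in> AA) \<and> card (range f) = nat \<bar>a * c\<bar>"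
    using span2_index[of "(a, b)" "(0, c)"] unfolding dl AA_def by simp
  thus ?thesis unfolding fA_def by (rule someI_ex)
qed

lemma fA_eq: "fA x = fA y \<longleftrightarrow> x - y \<in> AA" using fA_props by blast
lemma fA_card: "card (range fA) = nat (a * c)" using fA_props apos cpos by simp

lemma tau_diff: "tau (\<lambda>x. D1 x - D2 x) = tau D1 - tau D2"
  unfolding tau_def by (simp add: right_diff_distrib sum_subtractf)

lemma tau_scale: "tau (\<lambda>x. k * D x) = smul k (tau D)"
  unfolding tau_def by (simp add: smul_def sum_distrib_left algebra_simps)

lemma tau_prin:
  assumes "\<And>i. i < n \<Longrightarrow> D (\<rho> i) = pair m (\<rho> i)"
  shows "tau D = (pair m (a, 0), pair m (b, c))"
proof -
  have "(\<Sum>i<n. ka i * D (\<rho> i)) = pair m (a, 0)"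
    unfolding ka_eq pair_sum2 pair_smul2 using assms by (intro sum.cong) auto
  moreover have "(\<Sum>i<n. kb i * D (\<rho> i)) = pair m (b, c)"
    unfolding kb_eq pair_sum2 pair_smul2 using assms by (intro sum.cong) auto
  ultimately show ?thesis unfolding tau_def by simp
qed

lemma pair_AA: "(pair m (a, 0), pair m (b, c)) \<in> AA"
proof -
  have "(pair m (a, 0), pair m (b, c)) = smul (fst m) (a, b) + smul (snd m) (0, c)"
    by (simp add: pair_def smul_def algebra_simps)
  thus ?thesis unfolding AA_def span2_def by blast
qed

lemma Prin_on_rho: "P \<in> Prin (rays S) \<Longrightarrow> \<exists>m. P = prin_div (rays S) m \<and> (\<forall>i. P (\<rho> i) = pair m (\<rho> i))"
proof -
  assume "P \<in> Prin (rays S)"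
  then obtain m where m: "P = prin_div (rays S) m" unfolding Prin_def by blast
  show ?thesis by (rule exI[of _ m]) (simp add: m prin_div_def rho_rays)
qed

definition Tor :: "(lat \<Rightarrow> int) set" where
  "Tor = {D \<in> Div. \<exists>k::nat. k > 0 \<and> (\<lambda>x. int k * D x) \<in> Prin (rays S)}"

lemma prin_scale: "(\<lambda>x. k * prin_div R m x) = prin_div R (smul k m)"
  by (auto simp: prin_div_def)

lemma tor_key:
  assumes D1: "D1 \<in> Tor" and D2: "D2 \<in> Tor"
  shows "cosP (Prin (rays S)) D1 = cosP (Prin (rays S)) D2 \<longleftrightarrow> fA (tau D1) = fA (tau D2)"
proof -
  let ?P = "Prin (rays S)"
  have "cosP ?P D1 = cosP ?P D2 \<longleftrightarrow> (\<lambda>x. D1 x - D2 x) \<in> ?P" by (rule cosP_eq[OF addcl_Prin])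
  also have "\<dots> \<longleftrightarrow> tau D1 - tau D2 \<in> AA"
  proof
    assume "(\<lambda>x. D1 x - D2 x) \<in> ?P"
    then obtain m where m: "\<forall>i. D1 (\<rho> i) - D2 (\<rho> i) = pair m (\<rho> i)" using Prin_on_rho by fastforce
    have "tau (\<lambda>x. D1 x - D2 x) = (pair m (a, 0), pair m (b, c))" by (rule tau_prin) (use m in simp)
    thus "tau D1 - tau D2 \<in> AA" using pair_AA tau_diff by simp
  next
    assume "tau D1 - tau D2 \<in> AA"
    then obtain p q where pq: "tau D1 - tau D2 = smul p (a, b) + smul q (0, c)" unfolding AA_def span2_def by blast
    define m where "m = (p, q)"
    have tm: "tau (\<lambda>x. D1 x - D2 x) = (pair m (a, 0), pair m (b, c))"
      unfolding tau_diff pq m_def by (simp add: pair_def smul_def algebra_simps)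
    define E where "E x = D1 x - D2 x - prin_div (rays S) m x" for x
    have D1D: "D1 \<in> Div" and D2D: "D2 \<in> Div" using D1 D2 by (auto simp: Tor_def)
    have ED: "E \<in> Div" unfolding E_def using D1D D2D by (auto simp: Div_iff prin_div_def)
    have tE: "tau E = 0"
    proof -
      have "tau (prin_div (rays S) m) = (pair m (a, 0), pair m (b, c))"
        by (rule tau_prin) (use rho_rays in \<open>simp add: prin_div_def\<close>)
      moreover have "E = (\<lambda>x. (\<lambda>x. D1 x - D2 x) x - prin_div (rays S) m x)" unfolding E_def by simp
      ultimately show ?thesis using tm tau_diff by (simp add: zero_prod_def)
    qed
    obtain k1 :: nat where k1: "k1 > 0" "(\<lambda>x. int k1 * D1 x) \<in> ?P" using D1 by (auto simp: Tor_def)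
    obtain k2 :: nat where k2: "k2 > 0" "(\<lambda>x. int k2 * D2 x) \<in> ?P" using D2 by (auto simp: Tor_def)
    obtain m1 where m1: "(\<lambda>x. int k1 * D1 x) = prin_div (rays S) m1" using k1(2) unfolding Prin_def by blast
    obtain m2 where m2: "(\<lambda>x. int k2 * D2 x) = prin_div (rays S) m2" using k2(2) unfolding Prin_def by blast
    define K where "K = int k1 * int k2"
    have Kpos: "K > 0" unfolding K_def using k1 k2 by simp
    have KE: "(\<lambda>x. K * E x) = prin_div (rays S) (smul (int k2) m1 - smul (int k1) m2 - smul K m)"
    proof
      fix x
      have a1: "int k1 * D1 x = prin_div (rays S) m1 x" using fun_cong[OF m1, of x] by simp
      have a2: "int k2 * D2 x = prin_div (rays S) m2 x" using fun_cong[OF m2, of x] by simp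
      have "K * E x = int k2 * (int k1 * D1 x) - int k1 * (int k2 * D2 x) - K * prin_div (rays S) m x"
        unfolding E_def K_def by (simp add: algebra_simps)
      also have "\<dots> = prin_div (rays S) (smul (int k2) m1 - smul (int k1) m2 - smul K m) x"
        unfolding a1 a2 by (simp add: prin_div_def algebra_simps)
      finally show "K * E x = prin_div (rays S) (smul (int k2) m1 - smul (int k1) m2 - smul K m) x" .
    qed
    define m' where "m' = smul (int k2) m1 - smul (int k1) m2 - smul K m"
    have "tau (\<lambda>x. K * E x) = (pair m' (a, 0), pair m' (b, c))"
      unfolding KE m'_def[symmetric] by (rule tau_prin) (use rho_rays in \<open>simp add: prin_div_def\<close>)
    moreover have "tau (\<lambda>x. K * E x) = 0" unfolding tau_scale tE by (simp add: smul_def zero_prod_def)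
    ultimately have z: "pair m' (a, 0) = 0" "pair m' (b, c) = 0" by (simp_all add: zero_prod_def)
    have "fst m' = 0" using z(1) apos by (simp add: pair_def)
    moreover have "snd m' = 0" using z(2) cpos \<open>fst m' = 0\<close> by (simp add: pair_def)
    ultimately have "m' = 0" by (simp add: prod_eq_iff)
    hence "\<forall>x. K * E x = 0" using fun_cong[OF KE] unfolding m'_def[symmetric] by (simp add: prin_div_def)
    hence E0: "\<forall>x. E x = 0" using Kpos by simp
    have "(\<lambda>x. D1 x - D2 x) = prin_div (rays S) m"
    proof
      fix x show "D1 x - D2 x = prin_div (rays S) m x" using E0 unfolding E_def by (metis eq_iff_diff_eq_0)
    qed
    thus "(\<lambda>x. D1 x - D2 x) \<in> ?P" unfolding Prin_def by simp
  qed
  also have "\<dots> \<longleftrightarrow> fA (tau D1) = fA (tau D2)" by (simp add: fA_eq)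
  finally show ?thesis .
qed

lemma tau_surj: "tau ` Tor = UNIV"
proof -
  have "y \<in> tau ` Tor" for y
  proof -
    obtain p q where y: "y = (p, q)" by (cases y)
    define g where "g = a * c"
    have gpos: "g > 0" unfolding g_def using apos cpos by simp
    define m where "m = (p * c, - p * b + q * a)"
    have gr: "g dvd pair m r" if r: "r \<in> rays S" for r
    proof -
      obtain i where "r = \<rho> i" using r rays_eq by blast
      hence "r \<in> Nsp" using rho_Nsp by simp
      then obtain s t where st: "r = smul s (a, 0) + smul t (b, c)" unfolding Nsp_eq span2_def by blast
      have "pair m r = g * (s * p + t * q)" unfolding st g_def m_def by (simp add: pair_def algebra_simps)
      thus ?thesis by simp
    qed
    define D where "D r = (if r \<in> rays S then pair m r div g else 0)" for r
    have DD: "D \<in> Div" unfolding Div_iff D_def by simp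
    have gD: "(\<lambda>x. g * D x) = prin_div (rays S) m"
    proof
      fix x show "g * D x = prin_div (rays S) m x"
        unfolding D_def prin_div_def using gr by simp
    qed
    have "(\<lambda>x. int (nat g) * D x) \<in> Prin (rays S)" unfolding Prin_def using gD gpos by simp
    hence DT: "D \<in> Tor" unfolding Tor_def using DD gpos by (intro CollectI conjI exI[of _ "nat g"]) auto
    have "smul g (tau D) = (pair m (a, 0), pair m (b, c))"
      unfolding tau_scale[symmetric] gD by (rule tau_prin) (use rho_rays in \<open>simp add: prin_div_def\<close>)
    also have "\<dots> = smul g (p, q)" unfolding m_def g_def by (simp add: pair_def smul_def algebra_simps)
    finally have "smul g (tau D) = smul g (p, q)" .
    hence "tau D = (p, q)" using gpos by (simp add: smul_def prod_eq_iff)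
    hence "y = tau D" using y by simp
    thus ?thesis using DT by (rule image_eqI)
  qed
  thus ?thesis by blast
qed

lemma Cl_pow: "D \<in> Div \<Longrightarrow> cosP (Prin (rays S)) D [^]\<^bsub>Cl_grp S\<^esub> (k::nat) = cosP (Prin (rays S)) (\<lambda>x. int k * D x)"
proof (induction k)
  case 0
  have "cosP (Prin (rays S)) D [^]\<^bsub>Cl_grp S\<^esub> (0::nat) = Prin (rays S)"
    by (simp add: Cl_grp_def FactGroup_def)
  then show ?case by (simp add: cosP_zero)
next
  case (Suc k)
  have "cosP (Prin (rays S)) D [^]\<^bsub>Cl_grp S\<^esub> Suc k
      = set_mult (divisor_grp (rays S)) (cosP (Prin (rays S)) (\<lambda>x. int k * D x)) (cosP (Prin (rays S)) D)"
    using Suc by (simp add: Cl_grp_def FactGroup_def)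
  also have "\<dots> = cosP (Prin (rays S)) (\<lambda>x. int k * D x + D x)" by (rule set_mult_cosP[OF addcl_Prin])
  also have "(\<lambda>x. int k * D x + D x) = (\<lambda>x. int (Suc k) * D x)" by (auto simp: algebra_simps)
  finally show ?case .
qed

lemma Cl_tors_eq: "Cl_tors S = cosP (Prin (rays S)) ` Tor"
proof -
  let ?P = "Prin (rays S)"
  have one: "\<one>\<^bsub>Cl_grp S\<^esub> = ?P" by (simp add: Cl_grp_def FactGroup_def)
  have iff: "cosP ?P E = ?P \<longleftrightarrow> E \<in> ?P" for E
    using cosP_eq[OF addcl_Prin, where a = E and b = "\<lambda>x. 0"] by (simp add: cosP_zero)
  show ?thesis
  proof
    show "Cl_tors S \<subseteq> cosP ?P ` Tor"
    proof
      fix C assume "C \<in> Cl_tors S"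
      then obtain k :: nat where C: "C \<in> carrier (Cl_grp S)" "k > 0" "C [^]\<^bsub>Cl_grp S\<^esub> k = \<one>\<^bsub>Cl_grp S\<^esub>"
        unfolding Cl_tors_def by blast
      obtain D where D: "D \<in> Div" "C = cosP ?P D" using C(1) unfolding carrier_Cl by blast
      have "(\<lambda>x. int k * D x) \<in> ?P" using C(3) Cl_pow[OF D(1), of k] D(2) one iff by simp
      hence "D \<in> Tor" unfolding Tor_def using D(1) C(2) by blast
      thus "C \<in> cosP ?P ` Tor" using D(2) by blast
    qed
  next
    show "cosP ?P ` Tor \<subseteq> Cl_tors S"
    proof
      fix C assume "C \<in> cosP ?P ` Tor"
      then obtain D where D: "D \<in> Tor" "C = cosP ?P D" by blast
      obtain k :: nat where k: "k > 0" "(\<lambda>x. int k * D x) \<in> ?P" "D \<in> Div" using D(1) unfolding Tor_def by blast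
      have "C \<in> carrier (Cl_grp S)" unfolding carrier_Cl using D(2) k(3) by blast
      moreover have "C [^]\<^bsub>Cl_grp S\<^esub> k = \<one>\<^bsub>Cl_grp S\<^esub>" using Cl_pow[OF k(3), of k] D(2) one iff k(2) by simp
      ultimately show "C \<in> Cl_tors S" unfolding Cl_tors_def using k(1) by blast
    qed
  qed
qed

lemma card_tors: "card (Cl_tors S) = nat (a * c)"
proof -
  have "card (Cl_tors S) = card ((\<lambda>D. fA (tau D)) ` Tor)"
    unfolding Cl_tors_eq by (rule eqcard) (rule tor_key)
  also have "(\<lambda>D. fA (tau D)) ` Tor = fA ` (tau ` Tor)" by (simp add: image_image)
  also have "\<dots> = range fA" unfolding tau_surj ..
  finally show ?thesis using fA_card by simp
qed

end


theorem corollary7p3: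
  fixes S :: "(lat \<times> lat) set"
  assumes "complete_fan2 S" and "projective_fan2 S"
  shows "real (card (rcosets\<^bsub>Cl_grp S\<^esub> (Pic_sub S)))
       = (1 / real (card (Cl_tors S))) * (\<Prod>c\<in>S. real (card (carrier (local_Cl_grp c))))"
proof -
  interpret F: fan2 S by unfold_locales (rule assms(1))
  interpret C: cyc S F.rho F.nn
    by unfold_locales (rule F.nn(1), rule F.rho_prim, rule F.rho_det, rule F.rho_per, rule F.rho_inj, rule F.rays_eq, rule F.S_eq)
  from C.exists_hnf obtain a b c where abc0: "a > 0 \<and> c > 0 \<and> C.Nsp = span2 (a, 0) (b, c)"
    by (elim exE) (rule that)
  note abc = abc0[THEN conjunct1] abc0[THEN conjunct2, THEN conjunct1] abc0[THEN conjunct2, THEN conjunct2]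
  interpret B: cycb S F.rho F.nn a b c
    by unfold_locales (rule abc(1), rule abc(2), rule abc(3))
  have P: "card (rcosets\<^bsub>Cl_grp S\<^esub> (Pic_sub S)) = card (C.Phi ` C.Div)" by (rule C.Pic_index)
  have T: "card (Cl_tors S) = nat (a * c)" by (rule B.card_tors)
  have inj: "inj_on (\<lambda>i. (F.rho i, F.rho (Suc i))) {..<F.nn}"
  proof (rule inj_onI)
    fix i j assume i: "i \<in> {..<F.nn}" and j: "j \<in> {..<F.nn}" and e: "(F.rho i, F.rho (Suc i)) = (F.rho j, F.rho (Suc j))"
    have "F.rho i = F.rho j" using e by simp
    thus "i = j" using inj_onD[OF F.rho_inj _ i j] by simp
  qed
  have "(\<Prod>c\<in>S. card (carrier (local_Cl_grp c))) = (\<Prod>c\<in>(\<lambda>i. (F.rho i, F.rho (Suc i))) ` {..<F.nn}. card (carrier (local_Cl_grp c)))"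
    by (rule arg_cong[where f = "\<lambda>A. \<Prod>c\<in>A. card (carrier (local_Cl_grp c))"]) (rule F.S_eq)
  also have "\<dots> = (\<Prod>i<F.nn. card (carrier (local_Cl_grp (F.rho i, F.rho (Suc i)))))"
    by (simp only: prod.reindex[OF inj] comp_def)
  also have "\<dots> = (\<Prod>i<F.nn. nat (C.dd i))"
    by (rule prod.cong) (simp_all add: local_card F.rho_prim F.rho_det C.dd_def)
  also have "\<dots> = nat (a * c) * card (C.Phi ` C.Div)" by (rule B.count)
  finally have pr: "(\<Prod>c\<in>S. card (carrier (local_Cl_grp c))) = nat (a * c) * card (C.Phi ` C.Div)" .
  have "(\<Prod>c\<in>S. real (card (carrier (local_Cl_grp c)))) = real (\<Prod>c\<in>S. card (carrier (local_Cl_grp c)))"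
    by simp
  also have "\<dots> = real (nat (a * c)) * real (card (C.Phi ` C.Div))" unfolding pr by simp
  finally have pr2: "(\<Prod>c\<in>S. real (card (carrier (local_Cl_grp c)))) = real (nat (a * c)) * real (card (C.Phi ` C.Div))" .
  have gpos: "real (nat (a * c)) > 0" using abc by simp
  have key: "\<And>x y :: real. x > 0 \<Longrightarrow> y = 1 / x * (x * y)" by simp
  show ?thesis unfolding P T pr2 by (rule key[OF gpos])
qed


end
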